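(* Consider the extremum seeking system with feedback law $u_{i,1}(J(x),\tau)=\sqrt{2\omega_i}\cos(J(x)+\omega_i\tau)$, $u_{i,2}(J(x),\tau)=\sqrt{2\omega_i}\sin(J(x)+\omega_i\tau)$, written in shifted coordinates $\tilde x=x-x^\star$: $$\dot{\tilde x}=b_0(\tilde x+x^\star)+\varepsilon^{-1}\sum_{i=1}^r\sum_{j=1}^2b_{i,j}u_{i,j}(J(\tilde x+x^\star),\tau),\qquad\dot\tau=\varepsilon^{-2}.$$ Suppose the Excitation Assumption holds with constant $\gamma$ and the Regularity Assumption holds with constant $\kappa_3$, with $\gamma>\kappa_3$, and suppose $J$ is a radially unbounded $\mathcal{C}^2$ function for which there exist $\alpha_J\in\mathcal{K}$ and $M_J>0$ with $\alpha_J(|x-x^\star|)^2\le|\nabla J(x)|^2\le M_J^2$ for all $x\in\mathbb{R}^n$. Then the origin $\tilde x=0$ is uniformly globally practically asymptotically stable for this system.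
   Context: $|\cdot|$ is the Euclidean norm; $\mathcal{K},\mathcal{KL}$ standard comparison-function classes. Data: $n\ge1$, $r$ a positive integer with $r\ge n/2$, vectors $b_{i,j}\in\mathbb{R}^n$ ($i=1,\dots,r$, $j=1,2$), distinct positive rationals $\omega_1,\dots,\omega_r$, a map $b_0:\mathbb{R}^n\to\mathbb{R}^n$, a cost $J:\mathbb{R}^n\to\mathbb{R}$ with $J^\star:=\inf_xJ(x)>-\infty$ attained at a unique $x^\star$, and a parameter $\varepsilon>0$. Excitation Assumption: there is $\gamma>0$ with $\sum_{i=1}^r\sum_{j=1}^2(b_{i,j}^\top v)^2\ge\gamma|v|^2$ for all $v\in\mathbb{R}^n$. Regularity Assumption: (a) $J(x)>J(x^\star)$ for $x\ne x^\star$; (b) $\nabla J(x)=0$ iff $x=x^\star$; (c) there is $L_J>0$ with $|\nabla^2J(x)|\le L_J$ for all $x$; (d) there is $\kappa_3>0$ with $|b_0(x)|\le\kappa_3|\nabla J(x)|$ for all $x$; (e) there is $L_0>0$ with $|b_0(x_1)-b_0(x_2)|\le L_0|x_1-x_2|$ for all $x_1,x_2$. Solutions: for initial $(\tilde x_0,\tau_0)\in\mathbb{R}^n\times\mathbb{R}_{\ge0}$, a $\mathcal{C}^1$ function on $[0,t_s)$, $t_s\in(0,\infty]$, satisfying the ODE and initial condition. The origin is uniformly globally practically asymptotically stable if there is $\beta\in\mathcal{KL}$ such that for every $\nu>0$ there is $\varepsilon^*>0$ such that for all $\varepsilon\in(0,\varepsilon^* )$ every solution from every initial condition is defined for all $t\ge0$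 and satisfies $|\tilde x(t)|\le\beta(|\tilde x_0|,t)+\nu$ for all $t\ge0$. *)

theory Defs
  imports "HOL-Analysis.Analysis"
begin

definition class_K :: "(real \<Rightarrow> real) \<Rightarrow> bool" where
  "class_K \<alpha> \<longleftrightarrow> continuous_on {0..} \<alpha> \<and> \<alpha> 0 = 0 \<and> strict_mono_on {0..} \<alpha>"

definition class_KL :: "(real \<Rightarrow> real \<Rightarrow> real) \<Rightarrow> bool" where
  "class_KL \<beta> \<longleftrightarrow> continuous_on ({0..} \<times> {0..}) (\<lambda>(s,t). \<beta> s t)
     \<and> (\<forall>t\<ge>0. class_K (\<lambda>s. \<beta> s t))
     \<and> (\<forall>s\<ge>0. antimono_on {0..} (\<beta> s) \<and> ((\<beta> s) \<longlongrightarrow> 0) at_top)"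

definition dither :: "(nat \<Rightarrow> real) \<Rightarrow> nat \<Rightarrow> nat \<Rightarrow> real \<Rightarrow> real \<Rightarrow> real" where
  "dither \<omega> i j y \<tau> =
     (if j = 1 then sqrt (2 * \<omega> i) * cos (y + \<omega> i * \<tau>)
      else sqrt (2 * \<omega> i) * sin (y + \<omega> i * \<tau>))"

definition es_rhs :: "('a::euclidean_space \<Rightarrow> 'a) \<Rightarrow> ('a \<Rightarrow> real) \<Rightarrow> 'a \<Rightarrow> nat
    \<Rightarrow> (nat \<Rightarrow> nat \<Rightarrow> 'a) \<Rightarrow> (nat \<Rightarrow> real) \<Rightarrow> real \<Rightarrow> 'a \<Rightarrow> real \<Rightarrow> 'a" where
  "es_rhs b0 J xs r b \<omega> \<epsilon> x \<tau> =
     b0 (x + xs) + (1 / \<epsilon>) *\<^sub>R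
       (\<Sum>i\<in>{1..r}. \<Sum>j\<in>{1,2}. dither \<omega> i j (J (x + xs)) \<tau> *\<^sub>R b i j)"

definition dom_ts :: "ereal \<Rightarrow> real set" where
  "dom_ts ts = {t. 0 \<le> t \<and> ereal t < ts}"

definition es_solution :: "('a::euclidean_space \<Rightarrow> 'a) \<Rightarrow> ('a \<Rightarrow> real) \<Rightarrow> 'a \<Rightarrow> nat
    \<Rightarrow> (nat \<Rightarrow> nat \<Rightarrow> 'a) \<Rightarrow> (nat \<Rightarrow> real) \<Rightarrow> real \<Rightarrow> 'a \<Rightarrow> real \<Rightarrow> ereal
    \<Rightarrow> (real \<Rightarrow> 'a) \<Rightarrow> (real \<Rightarrow> real) \<Rightarrow> bool" where
  "es_solution b0 J xs r b \<omega> \<epsilon> x0 \<tau>0 ts X T \<longleftrightarrow>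
     ts > 0 \<and> X 0 = x0 \<and> T 0 = \<tau>0 \<and>
     continuous_on (dom_ts ts) (\<lambda>t. es_rhs b0 J xs r b \<omega> \<epsilon> (X t) (T t)) \<and>
     (\<forall>t\<in>dom_ts ts.
        (X has_vector_derivative es_rhs b0 J xs r b \<omega> \<epsilon> (X t) (T t)) (at t within dom_ts ts) \<and>
        (T has_vector_derivative 1 / \<epsilon>\<^sup>2) (at t within dom_ts ts))"

definition es_UGpAS :: "('a::euclidean_space \<Rightarrow> 'a) \<Rightarrow> ('a \<Rightarrow> real) \<Rightarrow> 'a \<Rightarrow> nat
    \<Rightarrow> (nat \<Rightarrow> nat \<Rightarrow> 'a) \<Rightarrow> (nat \<Rightarrow> real) \<Rightarrow> bool" where
  "es_UGpAS b0 J xs r b \<omega> \<longleftrightarrow>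
     (\<exists>\<beta>. class_KL \<beta> \<and>
       (\<forall>\<nu>>0. \<exists>\<epsilon>s>0. \<forall>\<epsilon>. 0 < \<epsilon> \<and> \<epsilon> < \<epsilon>s \<longrightarrow>
          (\<forall>x0 \<tau>0 ts X T. \<tau>0 \<ge> 0 \<and> es_solution b0 J xs r b \<omega> \<epsilon> x0 \<tau>0 ts X T \<longrightarrow>
             (\<exists>X' T'. es_solution b0 J xs r b \<omega> \<epsilon> x0 \<tau>0 \<infinity> X' T' \<and>
                 (\<forall>t\<in>dom_ts ts. X' t = X t \<and> T' t = T t)) \<and>
             (\<forall>t\<in>dom_ts ts. norm (X t) \<le> \<beta> (norm x0) t + \<nu>))))"

end

theory Submission
  imports Defs
begin


lemma vec_bound:
  fixes g :: "real \<Rightarrow> 'a::real_normed_vector"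
  assumes "a \<le> b"
    and d: "\<And>t. t \<in> {a..b} \<Longrightarrow> (g has_vector_derivative g' t) (at t within {a..b})"
    and B: "\<And>t. t \<in> {a..b} \<Longrightarrow> norm (g' t) \<le> B"
  shows "norm (g b - g a) \<le> B * (b - a)"
proof -
  have "norm (g b - g a) \<le> B * norm (b - a)"
    apply (rule differentiable_bound[of "{a..b}" g "\<lambda>t h. h *\<^sub>R g' t"])
    using d B assms(1) by (auto simp: has_vector_derivative_def intro!: onorm_le
        simp: mult.commute[of B] intro!: mult_left_mono)
  then show ?thesis using assms(1) by simp
qed

lemma real_nonincr:
  fixes h :: "real \<Rightarrow> real"
  assumes "a \<le> b"
    and d: "\<And>t. t \<in> {a..b} \<Longrightarrow> (h has_real_derivative h' t) (at t within {a..b})"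
    and B: "\<And>t. t \<in> {a..b} \<Longrightarrow> h' t \<le> 0"
  shows "h b \<le> h a"
proof -
  have "\<exists>x\<in>{a..b}. h b - h a = h' x * (b - a)"
    by (rule mvt_very_simple[OF assms(1), of h "\<lambda>t. (*) (h' t)"]) (use d in \<open>auto simp: has_field_derivative_def\<close>)
  then obtain x where x: "x \<in> {a..b}" "h b - h a = h' x * (b - a)" by blast
  have "h' x * (b - a) \<le> 0" using B[OF x(1)] assms(1) by (simp add: mult_nonpos_nonneg)
  then show ?thesis using x by simp
qed

primrec pic :: "(real \<Rightarrow> 'a \<Rightarrow> 'a) \<Rightarrow> 'a \<Rightarrow> nat \<Rightarrow> real \<Rightarrow> 'a::euclidean_space" where
  "pic f x0 0 = (\<lambda>t. x0)"
| "pic f x0 (Suc k) = (\<lambda>t. x0 + integral {0..t} (\<lambda>s. f s (pic f x0 k s)))"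

lemma picard:
  fixes f :: "real \<Rightarrow> 'a::euclidean_space \<Rightarrow> 'a"
  assumes fc: "\<And>\<phi> S. continuous_on S \<phi> \<Longrightarrow> continuous_on S (\<lambda>s. f s (\<phi> s))"
    and lip: "\<And>t x y. norm (f t x - f t y) \<le> L * norm (x - y)" and L: "L > 0"
    and bnd: "\<And>t x. norm (f t x) \<le> B"
  shows "\<exists>Y. Y 0 = x0 \<and> (\<forall>t\<ge>0. (Y has_vector_derivative f t (Y t)) (at t within {0..}))"
proof -
  let ?p = "pic f x0"
  have cont: "continuous_on {0..N} (?p k)" for k N
  proof (induction k)
    case 0 then show ?case by simp
  next
    case (Suc k)
    have "continuous_on {0..N} (\<lambda>s. f s (?p k s))" using fc[OF Suc] .
    then have "continuous_on {0..N} (\<lambda>x. integral {0..x} (\<lambda>s. f s (?p k s)))"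
      by (intro indefinite_integral_continuous_1 integrable_continuous_interval)
    then show ?case by (simp add: continuous_on_add)
  qed
  have B0: "B \<ge> 0" using bnd[of 0 x0] norm_ge_zero[of "f 0 x0"] by linarith
  have diffb: "norm (?p (Suc k) t - ?p k t) \<le> B * L^k * t^(Suc k) / fact (Suc k)" if "t \<ge> 0" for k t
    using that
  proof (induction k arbitrary: t)
    case 0
    have "norm (integral {0..t} (\<lambda>s. f s x0)) \<le> B * (t - 0)"
      by (rule integral_bound) (use 0 fc[of _ "\<lambda>s. x0"] bnd in auto)
    then show ?case by simp
  next
    case (Suc k)
    let ?g = "\<lambda>s. f s (?p (Suc k) s) - f s (?p k s)"
    let ?h = "\<lambda>s. L * (B * L^k * s^(Suc k) / fact (Suc k))"
    have c1: "continuous_on {0..t} (\<lambda>s. f s (?p (Suc k) s))" by (rule fc[OF cont])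
    have c2: "continuous_on {0..t} (\<lambda>s. f s (?p k s))" by (rule fc[OF cont])
    have "?p (Suc (Suc k)) t - ?p (Suc k) t = integral {0..t} (\<lambda>s. f s (?p (Suc k) s)) - integral {0..t} (\<lambda>s. f s (?p k s))"
      by simp
    also have "\<dots> = integral {0..t} ?g"
      by (rule integral_diff[symmetric]) (intro integrable_continuous_interval c1 c2)+
    finally have eq: "?p (Suc (Suc k)) t - ?p (Suc k) t = integral {0..t} ?g" .
    have hint: "(?h has_integral (B * L^(Suc k) * t^(Suc (Suc k)) / fact (Suc (Suc k)) - B * L^(Suc k) * 0^(Suc (Suc k)) / fact (Suc (Suc k)))) {0..t}"
    proof (rule fundamental_theorem_of_calculus)
      show "0 \<le> t" using Suc by simp
      fix x assume "x \<in> {0..t}"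
      show "((\<lambda>s. B * L^(Suc k) * s^(Suc (Suc k)) / fact (Suc (Suc k))) has_vector_derivative ?h x) (at x within {0..t})"
        unfolding has_real_derivative_iff_has_vector_derivative[symmetric]
        apply (rule derivative_eq_intros refl | simp)+
        done
    qed
    have "norm (integral {0..t} ?g) \<le> integral {0..t} ?h"
    proof (rule integral_norm_bound_integral)
      show "?g integrable_on {0..t}" by (intro integrable_continuous_interval continuous_on_diff c1 c2)
      show "?h integrable_on {0..t}" using hint by blast
      fix s assume s: "s \<in> {0..t}"
      have "norm (?g s) \<le> L * norm (?p (Suc k) s - ?p k s)" by (rule lip)
      also have "\<dots> \<le> ?h s" using mult_left_mono[OF Suc.IH[of s], of L] s L by (simp del: pic.simps)
      finally show "norm (?g s) \<le> ?h s" .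
    qed
    also have "\<dots> = B * L^(Suc k) * t^(Suc (Suc k)) / fact (Suc (Suc k))"
      using integral_unique[OF hint] by simp
    finally show ?case using eq by simp
  qed

  define d where "d i t = ?p (Suc i) t - ?p i t" for i t
  have telesc: "?p n t = x0 + (\<Sum>i<n. d i t)" for n t
    by (induction n) (simp_all add: d_def)
  define Y where "Y t = x0 + suminf (\<lambda>i. d i t)" for t
  have ul: "uniform_limit {0..N} ?p Y sequentially" if N: "N \<ge> 0" for N
  proof -
    define m where "m k = (B / L) * ((L * N)^(Suc k) / fact (Suc k))" for k
    have md: "norm (d k t) \<le> m k" if "t \<in> {0..N}" for k t
    proof -
      have "norm (d k t) \<le> B * L^k * t^(Suc k) / fact (Suc k)" using diffb[of t k] that by (simp add: d_def)
      also have "\<dots> \<le> B * L^k * N^(Suc k) / fact (Suc k)"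
        using that B0 L by (intro divide_right_mono mult_left_mono power_mono) auto
      also have "\<dots> = m k" using L by (simp add: m_def power_mult_distrib field_simps)
      finally show ?thesis .
    qed
    have "summable (\<lambda>k. inverse (fact k) * (L * N)^k)" by (rule summable_exp)
    then have "summable (\<lambda>k. inverse (fact (Suc k)) * (L * N)^(Suc k))"
      using summable_ignore_initial_segment[of "\<lambda>k. inverse (fact k) * (L * N)^k" 1] by (simp del: fact_Suc power_Suc)
    then have "summable m" unfolding m_def by (intro summable_mult) (simp add: field_simps)
    then have "uniform_limit {0..N} (\<lambda>n t. \<Sum>i<n. d i t) (\<lambda>t. suminf (\<lambda>i. d i t)) sequentially"
      using md by (intro Weierstrass_m_test) auto
    then have "uniform_limit {0..N} (\<lambda>n t. x0 + (\<Sum>i<n. d i t)) (\<lambda>t. x0 + suminf (\<lambda>i. d i t)) sequentially"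
      by (intro uniform_limit_add uniform_limit_const)
    then show ?thesis by (simp add: telesc[abs_def] Y_def[abs_def])
  qed
  have Yc: "continuous_on {0..N} Y" if "N \<ge> 0" for N
    by (rule uniform_limit_theorem[OF always_eventually ul[OF that]]) (auto intro: cont)
  have Yint: "Y t = x0 + integral {0..t} (\<lambda>s. f s (Y s))" if t: "t \<ge> 0" for t
  proof -
    have "(\<lambda>n. ?p n t) \<longlonglongrightarrow> Y t" using tendsto_uniform_limitI[OF ul[OF t], of t] t by simp
    then have l1: "(\<lambda>n. ?p (Suc n) t) \<longlonglongrightarrow> Y t" by (rule LIMSEQ_Suc)
    have "(\<lambda>n. integral {0..t} (\<lambda>s. f s (?p n s))) \<longlonglongrightarrow> integral {0..t} (\<lambda>s. f s (Y s))"
    proof (rule LIMSEQ_I)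
      fix e :: real assume e: "e > 0"
      define e' where "e' = e / (L * (t + 1))"
      have e': "e' > 0" using e L t by (simp add: e'_def)
      obtain n0 where n0: "\<And>n. n \<ge> n0 \<Longrightarrow> \<forall>s\<in>{0..t}. dist (?p n s) (Y s) < e'"
        using uniform_limitD[OF ul[OF t] e'] by (auto simp: eventually_sequentially)
      show "\<exists>no. \<forall>n\<ge>no. norm (integral {0..t} (\<lambda>s. f s (?p n s)) - integral {0..t} (\<lambda>s. f s (Y s))) < e"
      proof (intro exI allI impI)
        fix n assume n: "n \<ge> n0"
        have ci1: "continuous_on {0..t} (\<lambda>s. f s (?p n s))" by (rule fc[OF cont])
        have ci2: "continuous_on {0..t} (\<lambda>s. f s (Y s))" by (rule fc[OF Yc[OF t]])
        have "integral {0..t} (\<lambda>s. f s (?p n s)) - integral {0..t} (\<lambda>s. f s (Y s))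
            = integral {0..t} (\<lambda>s. f s (?p n s) - f s (Y s))"
          by (rule integral_diff[symmetric]) (intro integrable_continuous_interval ci1 ci2)+
        also have "norm \<dots> \<le> (L * e') * (t - 0)"
        proof (rule integral_bound)
          show "continuous_on {0..t} (\<lambda>s. f s (?p n s) - f s (Y s))" by (intro continuous_on_diff ci1 ci2)
          fix s assume s: "s \<in> {0..t}"
          have "norm (f s (?p n s) - f s (Y s)) \<le> L * norm (?p n s - Y s)" by (rule lip)
          also have "\<dots> \<le> L * e'" using n0[OF n] s L by (auto simp: dist_norm intro!: mult_left_mono less_imp_le)
          finally show "norm (f s (?p n s) - f s (Y s)) \<le> L * e'" .
        qed (use t in auto)
        also have "\<dots> < e"
        proof -
          have "L * e' = e / (t + 1)" using L t by (simp add: e'_def)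
          then have "(L * e') * (t - 0) = e * (t / (t + 1))" by simp
          also have "\<dots> < e * 1" using e t by (intro mult_strict_left_mono) auto
          finally show ?thesis by simp
        qed
        finally show "norm (integral {0..t} (\<lambda>s. f s (?p n s)) - integral {0..t} (\<lambda>s. f s (Y s))) < e" .
      qed
    qed
    then have l2: "(\<lambda>n. ?p (Suc n) t) \<longlonglongrightarrow> x0 + integral {0..t} (\<lambda>s. f s (Y s))"
      by (simp add: tendsto_add)
    show ?thesis using LIMSEQ_unique[OF l1 l2] .
  qed
  have "(Y has_vector_derivative f t (Y t)) (at t within {0..})" if t: "t \<ge> 0" for t
  proof -
    define N where "N = t + 1"
    have N: "N \<ge> 0" "t \<in> {0..N}" using t by (auto simp: N_def)
    have "((\<lambda>u. integral {0..u} (\<lambda>s. f s (Y s))) has_vector_derivative f t (Y t)) (at t within {0..N})"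
      by (rule integral_has_vector_derivative[OF fc[OF Yc[OF N(1)]] N(2)])
    then have der: "((\<lambda>u. x0 + integral {0..u} (\<lambda>s. f s (Y s))) has_vector_derivative f t (Y t)) (at t within {0..N})"
      by (intro derivative_eq_intros) auto
    have "(Y has_vector_derivative f t (Y t)) (at t within {0..N})"
      by (rule has_vector_derivative_transform[OF N(2) _ der]) (use Yint in \<open>auto simp: N_def\<close>)
    moreover have "at t within {0..N} = at t within {0..}"
      by (rule at_within_nhd[of _ "{..<N}"]) (auto simp: N_def)
    ultimately show ?thesis by simp
  qed
  moreover have "Y 0 = x0" using Yint[of 0] by simp
  ultimately show ?thesis by blast
qed


lemma ode_unique:
  fixes X Y :: "real \<Rightarrow> 'a::real_inner"
  assumes t: "t \<ge> 0" and X0: "X 0 = Y 0"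
    and dX: "\<And>s. s \<in> {0..t} \<Longrightarrow> (X has_vector_derivative f s (X s)) (at s within {0..t})"
    and dY: "\<And>s. s \<in> {0..t} \<Longrightarrow> (Y has_vector_derivative f s (Y s)) (at s within {0..t})"
    and lip: "\<And>s x y. norm (f s x - f s y) \<le> L * norm (x - y)" and L: "L \<ge> 0"
  shows "X t = Y t"
proof -
  define h where "h s = exp (- (2 * L) * s) * ((X s - Y s) \<bullet> (X s - Y s))" for s
  define h' where "h' s = - (2 * L) * exp (- (2 * L) * s) * ((X s - Y s) \<bullet> (X s - Y s))
     + exp (- (2 * L) * s) * (2 * ((X s - Y s) \<bullet> (f s (X s) - f s (Y s))))" for s
  have "h t \<le> h 0"
  proof (rule real_nonincr[OF t, of h h'])
    fix s assume s: "s \<in> {0..t}"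
    have dz: "((\<lambda>s. X s - Y s) has_vector_derivative (f s (X s) - f s (Y s))) (at s within {0..t})"
      by (intro derivative_intros dX dY s)
    have dzz: "((\<lambda>s. (X s - Y s) \<bullet> (X s - Y s)) has_real_derivative 2 * ((X s - Y s) \<bullet> (f s (X s) - f s (Y s)))) (at s within {0..t})"
      unfolding has_field_derivative_def
      by (rule has_derivative_eq_rhs[OF has_derivative_inner[OF dz[unfolded has_vector_derivative_def] dz[unfolded has_vector_derivative_def]]])
        (auto simp: fun_eq_iff inner_commute algebra_simps)
    show "(h has_real_derivative h' s) (at s within {0..t})"
      unfolding h_def h'_def
      by (rule derivative_eq_intros dzz refl | simp)+
    have "(X s - Y s) \<bullet> (f s (X s) - f s (Y s)) \<le> norm (X s - Y s) * norm (f s (X s) - f s (Y s))"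
      by (rule norm_cauchy_schwarz)
    also have "\<dots> \<le> norm (X s - Y s) * (L * norm (X s - Y s))" by (intro mult_left_mono lip) auto
    also have "\<dots> = L * ((X s - Y s) \<bullet> (X s - Y s))" by (simp add: power2_norm_eq_inner[symmetric] power2_eq_square)
    finally have le: "(X s - Y s) \<bullet> (f s (X s) - f s (Y s)) - L * ((X s - Y s) \<bullet> (X s - Y s)) \<le> 0" by simp
    have "h' s = (2 * exp (- (2 * L) * s)) * ((X s - Y s) \<bullet> (f s (X s) - f s (Y s)) - L * ((X s - Y s) \<bullet> (X s - Y s)))"
      unfolding h'_def by (simp add: algebra_simps)
    also have "\<dots> \<le> 0" by (rule mult_nonneg_nonpos[OF _ le]) simp
    finally show "h' s \<le> 0" .
  qed
  then have "(X t - Y t) \<bullet> (X t - Y t) \<le> 0" using X0 by (simp add: h_def zero_le_mult_iff mult_le_0_iff)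
  then have "(X t - Y t) \<bullet> (X t - Y t) = 0" by (meson inner_ge_zero order_antisym)
  then show ?thesis by simp
qed


definition Fs :: "real \<Rightarrow> real \<Rightarrow> real \<Rightarrow> real" where
  "Fs l C \<theta> = (if l = 0 then \<theta> * sin C else - cos (C + l * \<theta>) / l)"
definition Fc :: "real \<Rightarrow> real \<Rightarrow> real \<Rightarrow> real" where
  "Fc l C \<theta> = (if l = 0 then \<theta> * cos C else sin (C + l * \<theta>) / l)"

lemma Fs_deriv: "(Fs l C has_real_derivative sin (C + l * \<theta>)) (at \<theta>)"
proof (cases "l = 0")
  case True then show ?thesis unfolding Fs_def by (auto intro!: derivative_eq_intros)
next
  case False then show ?thesis unfolding Fs_def by (auto intro!: derivative_eq_intros)
qed

lemma Fc_deriv: "(Fc l C has_real_derivative cos (C + l * \<theta>)) (at \<theta>)"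
proof (cases "l = 0")
  case True then show ?thesis unfolding Fc_def by (auto intro!: derivative_eq_intros)
next
  case False then show ?thesis unfolding Fc_def by (auto intro!: derivative_eq_intros)
qed

lemma per_arg: "l * T = 2 * pi * of_int m \<Longrightarrow> C + l * (\<theta> + T) = (C + l * \<theta>) + (2 * pi) * of_int m"
  by (simp add: algebra_simps)

lemma sin_per: "l * T = 2 * pi * of_int m \<Longrightarrow> sin (C + l * (\<theta> + T)) = sin (C + l * \<theta>)"
  by (simp only: per_arg sin_add) simp
lemma cos_per: "l * T = 2 * pi * of_int m \<Longrightarrow> cos (C + l * (\<theta> + T)) = cos (C + l * \<theta>)"
  by (simp only: per_arg cos_add) simp

lemma Fs_per: assumes "l * T = 2 * pi * of_int m" shows "Fs l C (\<theta> + T) - Fs l C \<theta> = (if l = 0 then T * sin C else 0)"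
proof (cases "l = 0")
  case True then show ?thesis by (simp add: Fs_def algebra_simps)
next
  case False then show ?thesis unfolding Fs_def using cos_per[OF assms, of C \<theta>] by simp
qed
lemma Fc_per: assumes "l * T = 2 * pi * of_int m" shows "Fc l C (\<theta> + T) - Fc l C \<theta> = (if l = 0 then T * cos C else 0)"
proof (cases "l = 0")
  case True then show ?thesis by (simp add: Fc_def algebra_simps)
next
  case False then show ?thesis unfolding Fc_def using sin_per[OF assms, of C \<theta>] by simp
qed

lemma sqrt_omega: "\<omega> > 0 \<Longrightarrow> sqrt (2 / \<omega>) * \<omega> = sqrt (2 * \<omega>)"
proof -
  assume w: "\<omega> > 0"
  have "sqrt (2 * \<omega>) = sqrt (2 / \<omega>) * \<omega>"
  proof (rule real_sqrt_unique)
    have "(sqrt (2 / \<omega>) * \<omega>)^2 = (sqrt (2 / \<omega>))^2 * \<omega>^2" by (simp add: power_mult_distrib)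
    also have "\<dots> = (2 / \<omega>) * \<omega>^2" using w by simp
    also have "\<dots> = 2 * \<omega>" using w by (simp add: power2_eq_square)
    finally show "(sqrt (2 / \<omega>) * \<omega>)^2 = 2 * \<omega>" .
  qed (use w in simp)
  then show ?thesis by simp
qed

lemma trig_prod_ident:
  fixes x y a b p q :: real
  shows
  "2 * ((- sin x * a + cos x * b) * (sin y * p - cos y * q)) =
   - (a*p + b*q) * cos (x - y) + (a*p - b*q) * cos (x + y) + (a*q + b*p) * sin (x + y) + (a*q - b*p) * sin (x - y)"
  by (simp add: cos_diff cos_add sin_add sin_diff algebra_simps)

lemma pair_antideriv:
  assumes w: "\<omega> > 0" and v: "\<nu> > 0" and m: "\<omega> * T = 2 * pi * of_int m" and n: "\<nu> * T = 2 * pi * of_int n"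
  shows "\<exists>F. (\<forall>\<theta>. (F has_real_derivative ((- sqrt (2*\<omega>) * sin (c + \<omega>*\<theta>) * a + sqrt (2*\<omega>) * cos (c + \<omega>*\<theta>) * b)
                 * (sqrt (2/\<nu>) * (sin (c + \<nu>*\<theta>) * p - cos (c + \<nu>*\<theta>) * q)))) (at \<theta>))
        \<and> (\<forall>\<theta>. F (\<theta> + T) - F \<theta> = (if \<omega> = \<nu> then - T * (a*p + b*q) else 0))"
proof -
  define F where "F \<theta> = sqrt (\<omega>/\<nu>) * (- (a*p + b*q) * Fc (\<omega>-\<nu>) 0 \<theta> + (a*p - b*q) * Fc (\<omega>+\<nu>) (2*c) \<theta>
      + (a*q + b*p) * Fs (\<omega>+\<nu>) (2*c) \<theta> + (a*q - b*p) * Fs (\<omega>-\<nu>) 0 \<theta>)" for \<theta>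
  have sq: "sqrt (2*\<omega>) * sqrt (2/\<nu>) = 2 * sqrt (\<omega>/\<nu>)"
  proof -
    have "sqrt (2*\<omega>) * sqrt (2/\<nu>) = sqrt (2*\<omega> * (2/\<nu>))" by (rule real_sqrt_mult[symmetric])
    also have "\<dots> = 2 * sqrt (\<omega>/\<nu>)"
    proof (rule real_sqrt_unique)
      show "(2 * sqrt (\<omega>/\<nu>))^2 = 2*\<omega> * (2/\<nu>)" using w v by (simp add: power_mult_distrib)
    qed (use w v in simp)
    finally show ?thesis .
  qed
  have D: "(F has_real_derivative ((- sqrt (2*\<omega>) * sin (c + \<omega>*\<theta>) * a + sqrt (2*\<omega>) * cos (c + \<omega>*\<theta>) * b)
                 * (sqrt (2/\<nu>) * (sin (c + \<nu>*\<theta>) * p - cos (c + \<nu>*\<theta>) * q)))) (at \<theta>)" for \<theta>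
  proof -
    have "(F has_real_derivative sqrt (\<omega>/\<nu>) * (- (a*p + b*q) * cos (0 + (\<omega>-\<nu>)*\<theta>) + (a*p - b*q) * cos (2*c + (\<omega>+\<nu>)*\<theta>)
      + (a*q + b*p) * sin (2*c + (\<omega>+\<nu>)*\<theta>) + (a*q - b*p) * sin (0 + (\<omega>-\<nu>)*\<theta>))) (at \<theta>)"
      unfolding F_def[abs_def]
      by (intro DERIV_cmult DERIV_add DERIV_cmult Fc_deriv Fs_deriv)
    moreover have "sqrt (\<omega>/\<nu>) * (- (a*p + b*q) * cos (0 + (\<omega>-\<nu>)*\<theta>) + (a*p - b*q) * cos (2*c + (\<omega>+\<nu>)*\<theta>)
      + (a*q + b*p) * sin (2*c + (\<omega>+\<nu>)*\<theta>) + (a*q - b*p) * sin (0 + (\<omega>-\<nu>)*\<theta>))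
      = (- sqrt (2*\<omega>) * sin (c + \<omega>*\<theta>) * a + sqrt (2*\<omega>) * cos (c + \<omega>*\<theta>) * b)
                 * (sqrt (2/\<nu>) * (sin (c + \<nu>*\<theta>) * p - cos (c + \<nu>*\<theta>) * q))"
    proof -
      have e1: "0 + (\<omega>-\<nu>)*\<theta> = (c + \<omega>*\<theta>) - (c + \<nu>*\<theta>)" "2*c + (\<omega>+\<nu>)*\<theta> = (c + \<omega>*\<theta>) + (c + \<nu>*\<theta>)"
        by (simp_all add: algebra_simps)
      have "(- sqrt (2*\<omega>) * sin (c + \<omega>*\<theta>) * a + sqrt (2*\<omega>) * cos (c + \<omega>*\<theta>) * b)
                 * (sqrt (2/\<nu>) * (sin (c + \<nu>*\<theta>) * p - cos (c + \<nu>*\<theta>) * q))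
          = (sqrt (2*\<omega>) * sqrt (2/\<nu>)) * ((- sin (c + \<omega>*\<theta>) * a + cos (c + \<omega>*\<theta>) * b) * (sin (c + \<nu>*\<theta>) * p - cos (c + \<nu>*\<theta>) * q))"
        by (simp add: algebra_simps)
      also have "\<dots> = sqrt (\<omega>/\<nu>) * (2 * ((- sin (c + \<omega>*\<theta>) * a + cos (c + \<omega>*\<theta>) * b) * (sin (c + \<nu>*\<theta>) * p - cos (c + \<nu>*\<theta>) * q)))"
        unfolding sq by (simp add: algebra_simps)
      also have "\<dots> = sqrt (\<omega>/\<nu>) * (- (a*p + b*q) * cos (0 + (\<omega>-\<nu>)*\<theta>) + (a*p - b*q) * cos (2*c + (\<omega>+\<nu>)*\<theta>)
      + (a*q + b*p) * sin (2*c + (\<omega>+\<nu>)*\<theta>) + (a*q - b*p) * sin (0 + (\<omega>-\<nu>)*\<theta>))"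
        by (simp only: trig_prod_ident e1)
      finally show ?thesis by simp
    qed
    ultimately show ?thesis by simp
  qed
  have mn1: "(\<omega>-\<nu>) * T = 2 * pi * of_int (m - n)" using m n by (simp add: algebra_simps)
  have mn2: "(\<omega>+\<nu>) * T = 2 * pi * of_int (m + n)" using m n by (simp add: algebra_simps)
  have "F (\<theta> + T) - F \<theta> = (if \<omega> = \<nu> then - T * (a*p + b*q) else 0)" for \<theta>
  proof -
    have "F (\<theta> + T) - F \<theta> = sqrt (\<omega>/\<nu>) * (- (a*p + b*q) * (Fc (\<omega>-\<nu>) 0 (\<theta>+T) - Fc (\<omega>-\<nu>) 0 \<theta>)
      + (a*p - b*q) * (Fc (\<omega>+\<nu>) (2*c) (\<theta>+T) - Fc (\<omega>+\<nu>) (2*c) \<theta>)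
      + (a*q + b*p) * (Fs (\<omega>+\<nu>) (2*c) (\<theta>+T) - Fs (\<omega>+\<nu>) (2*c) \<theta>)
      + (a*q - b*p) * (Fs (\<omega>-\<nu>) 0 (\<theta>+T) - Fs (\<omega>-\<nu>) 0 \<theta>))"
      unfolding F_def by (simp add: algebra_simps)
    also have "\<dots> = (if \<omega> = \<nu> then - T * (a*p + b*q) else 0)"
      unfolding Fc_per[OF mn1] Fc_per[OF mn2] Fs_per[OF mn1] Fs_per[OF mn2] using w v by (auto simp: algebra_simps)
    finally show ?thesis .
  qed
  with D show ?thesis by blast
qed

lemma single_antideriv:
  assumes w: "\<omega> > 0" and m: "\<omega> * T = 2 * pi * of_int m"
  shows "\<exists>F. (\<forall>\<theta>. (F has_real_derivative (- sqrt (2*\<omega>) * sin (c + \<omega>*\<theta>) * a + sqrt (2*\<omega>) * cos (c + \<omega>*\<theta>) * b)) (at \<theta>))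
        \<and> (\<forall>\<theta>. F (\<theta> + T) = F \<theta>)"
proof -
  define F where "F \<theta> = sqrt (2/\<omega>) * (cos (c + \<omega>*\<theta>) * a + sin (c + \<omega>*\<theta>) * b)" for \<theta>
  have "(F has_real_derivative (- sqrt (2*\<omega>) * sin (c + \<omega>*\<theta>) * a + sqrt (2*\<omega>) * cos (c + \<omega>*\<theta>) * b)) (at \<theta>)" for \<theta>
  proof -
    show ?thesis unfolding F_def[abs_def] sqrt_omega[OF w, symmetric]
      by (rule derivative_eq_intros refl)+ (simp add: algebra_simps)
  qed
  moreover have "F (\<theta> + T) = F \<theta>" for \<theta> unfolding F_def by (simp only: sin_per[OF m] cos_per[OF m])
  ultimately show ?thesis by blast
qed


lemma real_lip:
  fixes g :: "real \<Rightarrow> real"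
  assumes d: "\<And>s. (g has_real_derivative g' s) (at s)" and C: "\<And>s. \<bar>g' s\<bar> \<le> C"
  shows "\<bar>g y - g x\<bar> \<le> C * \<bar>y - x\<bar>"
proof -
  have "norm (g y - g x) \<le> C * norm (y - x)"
    apply (rule differentiable_bound[of UNIV g "\<lambda>s. (*) (g' s)"])
    using d C by (auto simp: has_field_derivative_def intro!: onorm_le simp: abs_mult intro!: mult_right_mono)
  then show ?thesis by simp
qed

lemma real_taylor:
  fixes g :: "real \<Rightarrow> real"
  assumes d: "\<And>s. (g has_real_derivative g' s) (at s)" and d2: "\<And>s. (g' has_real_derivative g'' s) (at s)"
    and C: "\<And>s. \<bar>g'' s\<bar> \<le> C"
  shows "\<bar>g y - g x - g' x * (y - x)\<bar> \<le> C * (y - x)^2"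
proof -
  have C0: "C \<ge> 0" using C[of 0] by linarith
  have "norm ((g y - g' x * y) - (g x - g' x * x)) \<le> (C * \<bar>y - x\<bar>) * norm (y - x)"
  proof (rule differentiable_bound[of "closed_segment x y" "\<lambda>s. g s - g' x * s" "\<lambda>s h. (g' s - g' x) * h"])
    fix s assume s: "s \<in> closed_segment x y"
    have "((\<lambda>s. g s - g' x * s) has_real_derivative (g' s - g' x)) (at s within closed_segment x y)"
      by (rule derivative_eq_intros has_field_derivative_at_within[OF d] | simp)+
    then show "((\<lambda>s. g s - g' x * s) has_derivative (\<lambda>h. (g' s - g' x) * h)) (at s within closed_segment x y)"
      by (simp add: has_field_derivative_def)
    have "\<bar>g' s - g' x\<bar> \<le> C * \<bar>s - x\<bar>" by (rule real_lip[OF d2 C])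
    also have "\<dots> \<le> C * \<bar>y - x\<bar>" using segment_bound1[OF s] C0 by (auto intro: mult_left_mono)
    finally show "onorm (\<lambda>h. (g' s - g' x) * h) \<le> C * \<bar>y - x\<bar>"
      by (intro onorm_le) (auto simp: abs_mult intro: mult_right_mono)
  qed auto
  then show ?thesis by (simp add: algebra_simps power2_eq_square abs_mult)
qed

definition ddither :: "(nat \<Rightarrow> real) \<Rightarrow> nat \<Rightarrow> nat \<Rightarrow> real \<Rightarrow> real \<Rightarrow> real" where
  "ddither \<omega> i j y \<tau> =
     (if j = 1 then - sqrt (2 * \<omega> i) * sin (y + \<omega> i * \<tau>)
      else sqrt (2 * \<omega> i) * cos (y + \<omega> i * \<tau>))"

lemma dither_deriv: "((\<lambda>y. dither \<omega> i j y \<tau>) has_real_derivative ddither \<omega> i j y \<tau>) (at y)"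
  unfolding dither_def ddither_def by (auto intro!: derivative_eq_intros)

lemma ddither_deriv: "((\<lambda>y. ddither \<omega> i j y \<tau>) has_real_derivative
   (if j = 1 then - sqrt (2 * \<omega> i) * cos (y + \<omega> i * \<tau>) else - sqrt (2 * \<omega> i) * sin (y + \<omega> i * \<tau>))) (at y)"
  unfolding ddither_def by (auto intro!: derivative_eq_intros)

lemma dither_bound: "\<omega> i \<ge> 0 \<Longrightarrow> \<bar>dither \<omega> i j y \<tau>\<bar> \<le> sqrt (2 * \<omega> i)"
  unfolding dither_def by (auto simp: abs_mult intro!: mult_left_le)

lemma ddither_bound: "\<omega> i \<ge> 0 \<Longrightarrow> \<bar>ddither \<omega> i j y \<tau>\<bar> \<le> sqrt (2 * \<omega> i)"
  unfolding ddither_def by (auto simp: abs_mult intro!: mult_left_le)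

lemma dither_lip: "\<omega> i \<ge> 0 \<Longrightarrow> \<bar>dither \<omega> i j y \<tau> - dither \<omega> i j y' \<tau>\<bar> \<le> sqrt (2 * \<omega> i) * \<bar>y - y'\<bar>"
  by (rule real_lip[OF dither_deriv ddither_bound])

lemma dither_taylor: "\<omega> i \<ge> 0 \<Longrightarrow> \<bar>dither \<omega> i j y \<tau> - dither \<omega> i j y0 \<tau> - ddither \<omega> i j y0 \<tau> * (y - y0)\<bar> \<le> sqrt (2 * \<omega> i) * (y - y0)^2"
  by (rule real_taylor[OF dither_deriv ddither_deriv]) (auto simp: abs_mult intro!: mult_left_le)


locale ES =
  fixes b0 :: "'a::euclidean_space \<Rightarrow> 'a" and J :: "'a \<Rightarrow> real" and dJ :: "'a \<Rightarrow> 'a"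
    and d2J :: "'a \<Rightarrow> ('a \<Rightarrow>\<^sub>L 'a)"
    and xs :: 'a and r :: nat and b :: "nat \<Rightarrow> nat \<Rightarrow> 'a" and \<omega> :: "nat \<Rightarrow> real"
    and \<gamma> \<kappa>3 M :: real and \<alpha> :: "real \<Rightarrow> real" and LJ L0 :: real
  assumes \<omega>_pos: "\<forall>i\<in>{1..r}. \<omega> i > 0 \<and> \<omega> i \<in> \<rat>"
    and \<omega>_inj: "inj_on \<omega> {1..r}"
    and J_deriv: "\<forall>x. (J has_derivative (\<lambda>h. dJ x \<bullet> h)) (at x)"
    and dJ_deriv: "\<forall>x. (dJ has_derivative blinfun_apply (d2J x)) (at x)"
    and gam: "\<gamma> > 0"
    and exc: "\<forall>v. (\<Sum>i\<in>{1..r}. \<Sum>j\<in>{1,2}. (b i j \<bullet> v)\<^sup>2) \<ge> \<gamma> * (norm v)\<^sup>2"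
    and reg_a: "\<forall>x. x \<noteq> xs \<longrightarrow> J x > J xs"
    and LJ: "LJ > 0" "\<forall>x. norm (d2J x) \<le> LJ"
    and k3: "\<kappa>3 > 0" "\<forall>x. norm (b0 x) \<le> \<kappa>3 * norm (dJ x)"
    and L0: "L0 > 0" "\<forall>x1 x2. norm (b0 x1 - b0 x2) \<le> L0 * norm (x1 - x2)"
    and gk: "\<gamma> > \<kappa>3"
    and radial: "filterlim J at_top at_infinity"
    and alpha: "class_K \<alpha>" and M: "M > 0"
    and grad: "\<forall>x. (\<alpha> (norm (x - xs)))\<^sup>2 \<le> (norm (dJ x))\<^sup>2 \<and> (norm (dJ x))\<^sup>2 \<le> M\<^sup>2"
begin

lemma dJ_le: "norm (dJ x) \<le> M"
proof -
  have "(norm (dJ x))\<^sup>2 \<le> M\<^sup>2" using grad by blast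
  then show ?thesis by (rule power2_le_imp_le) (use M in simp)
qed


lemma J_lip: "\<bar>J y - J x\<bar> \<le> M * norm (y - x)"
proof -
  have "norm (J y - J x) \<le> M * norm (y - x)"
  proof (rule differentiable_bound[of UNIV J "\<lambda>x h. dJ x \<bullet> h"])
    fix z :: 'a
    show "(J has_derivative (\<bullet>) (dJ z)) (at z within UNIV)" using J_deriv by simp
    show "onorm ((\<bullet>) (dJ z)) \<le> M"
    proof (rule onorm_le)
      fix h have "norm (dJ z \<bullet> h) \<le> norm (dJ z) * norm h" by (simp add: Cauchy_Schwarz_ineq2)
      also have "\<dots> \<le> M * norm h" by (intro mult_right_mono dJ_le) auto
      finally show "norm (dJ z \<bullet> h) \<le> M * norm h" .
    qed
  qed auto
  then show ?thesis by simp
qed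

lemma dJ_lip: "norm (dJ y - dJ x) \<le> LJ * norm (y - x)"
proof (rule differentiable_bound[of UNIV dJ "\<lambda>x. blinfun_apply (d2J x)"])
  fix z :: 'a
  show "(dJ has_derivative blinfun_apply (d2J z)) (at z within UNIV)" using dJ_deriv by simp
  show "onorm (blinfun_apply (d2J z)) \<le> LJ" using LJ by (simp add: norm_blinfun.rep_eq[symmetric])
qed auto

lemma J_taylor: "\<bar>J y - J x - dJ x \<bullet> (y - x)\<bar> \<le> LJ * (norm (y - x))^2"
proof -
  have "norm ((J y - dJ x \<bullet> y) - (J x - dJ x \<bullet> x)) \<le> (LJ * norm (y - x)) * norm (y - x)"
  proof (rule differentiable_bound[of "closed_segment x y" "\<lambda>z. J z - dJ x \<bullet> z" "\<lambda>z h. (dJ z - dJ x) \<bullet> h"])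
    fix z assume z: "z \<in> closed_segment x y"
    show "((\<lambda>z. J z - dJ x \<bullet> z) has_derivative (\<lambda>h. (dJ z - dJ x) \<bullet> h)) (at z within closed_segment x y)"
    proof -
      have Jd: "(J has_derivative (\<lambda>h. dJ z \<bullet> h)) (at z within closed_segment x y)"
        using J_deriv by (simp add: has_derivative_at_withinI)
      show ?thesis using Jd by (auto intro!: derivative_eq_intros simp: inner_diff_left)
    qed
    show "onorm (\<lambda>h. (dJ z - dJ x) \<bullet> h) \<le> LJ * norm (y - x)"
    proof (rule onorm_le)
      fix h
      have "norm ((dJ z - dJ x) \<bullet> h) \<le> norm (dJ z - dJ x) * norm h" by (simp add: Cauchy_Schwarz_ineq2)
      also have "\<dots> \<le> (LJ * norm (y - x)) * norm h"
      proof (intro mult_right_mono)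
        have "norm (dJ z - dJ x) \<le> LJ * norm (z - x)" by (rule dJ_lip)
        also have "\<dots> \<le> LJ * norm (y - x)" using segment_bound1[OF z] LJ by (auto intro: mult_left_mono)
        finally show "norm (dJ z - dJ x) \<le> LJ * norm (y - x)" .
      qed auto
      finally show "norm ((dJ z - dJ x) \<bullet> h) \<le> LJ * norm (y - x) * norm h" .
    qed
  qed auto
  then show ?thesis by (simp add: algebra_simps power2_eq_square inner_diff_right)
qed

lemma alpha_props: "continuous_on {0..} \<alpha>" "\<alpha> 0 = 0" "strict_mono_on {0..} \<alpha>"
  using alpha by (auto simp: class_K_def)

lemma alpha_mono: "0 \<le> s \<Longrightarrow> s \<le> s' \<Longrightarrow> \<alpha> s \<le> \<alpha> s'"
proof -
  assume a: "0 \<le> s" "s \<le> s'"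
  show ?thesis
  proof (cases "s = s'")
    case False
    then have "\<alpha> s < \<alpha> s'" using a by (intro strict_mono_onD[OF alpha_props(3)]) auto
    then show ?thesis by simp
  qed simp
qed

lemma alpha_nonneg: "s \<ge> 0 \<Longrightarrow> \<alpha> s \<ge> 0"
  using alpha_mono[of 0 s] alpha_props(2) by simp



lemma alpha_grad: "\<alpha> (norm x) \<le> norm (dJ (x + xs))"
proof -
  have "(\<alpha> (norm x))\<^sup>2 \<le> (norm (dJ (x + xs)))\<^sup>2" using grad[rule_format, of "x + xs"] by simp
  then show ?thesis by (rule power2_le_imp_le) simp
qed

lemma alpha_le_M: "s \<ge> 0 \<Longrightarrow> \<alpha> s \<le> M"
proof -
  assume s: "s \<ge> 0"
  obtain e :: 'a where "e \<in> Basis" using nonempty_Basis by (metis all_not_in_conv)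
  then have e: "norm e = 1" by (rule norm_Basis)
  have "\<alpha> (norm (s *\<^sub>R e)) \<le> norm (dJ (s *\<^sub>R e + xs))" by (rule alpha_grad)
  also have "\<dots> \<le> M" by (rule dJ_le)
  finally show ?thesis using s e by simp
qed

end


lemma rat_den: "(x::real) \<in> \<rat> \<Longrightarrow> \<exists>q::int. q > 0 \<and> x * of_int q \<in> \<int>"
proof -
  assume "x \<in> \<rat>"
  then obtain a b where ab: "b > 0" "x = of_int a / of_int b" by (rule Rats_cases')
  then have "x * of_int b = of_int a" by simp
  then show ?thesis using ab(1) by (metis Ints_of_int)
qed

lemma common_den:
  fixes w :: "nat \<Rightarrow> real"
  assumes "finite I" "\<forall>i\<in>I. w i \<in> \<rat>"
  shows "\<exists>Q::int. Q > 0 \<and> (\<forall>i\<in>I. w i * of_int Q \<in> \<int>)"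
  using assms
proof (induction I rule: finite_induct)
  case empty then show ?case by (intro exI[of _ 1]) auto
next
  case (insert i I)
  then obtain Q where Q: "Q > 0" "\<forall>k\<in>I. w k * of_int Q \<in> \<int>" by auto
  obtain q where q: "q > 0" "w i * of_int q \<in> \<int>" using rat_den insert.prems by auto
  have "\<forall>k\<in>insert i I. w k * of_int (Q * q) \<in> \<int>"
  proof
    fix k assume "k \<in> insert i I"
    then show "w k * of_int (Q * q) \<in> \<int>"
    proof
      assume "k = i"
      then have "w k * of_int (Q * q) = (w i * of_int q) * of_int Q" by simp
      moreover have "(w i * of_int q) * of_int Q \<in> \<int>" by (rule Ints_mult[OF q(2)]) simp
      ultimately show ?thesis by metis
    next
      assume "k \<in> I"
      have "w k * of_int (Q * q) = (w k * of_int Q) * of_int q" by simp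
      moreover have "(w k * of_int Q) * of_int q \<in> \<int>" using Q(2) \<open>k \<in> I\<close> by (intro Ints_mult[of "w k * of_int Q"]) auto
      ultimately show ?thesis by metis
    qed
  qed
  then show ?case using Q(1) q(1) by (intro exI[of _ "Q * q"]) auto
qed

context ES begin

lemma common_period: "\<exists>Tp>0. \<forall>i\<in>{1..r}. \<exists>m::int. \<omega> i * Tp = 2 * pi * of_int m"
proof -
  obtain Q :: int where Q: "Q > 0" "\<forall>i\<in>{1..r}. \<omega> i * of_int Q \<in> \<int>"
    using common_den[of "{1..r}" \<omega>] \<omega>_pos by auto
  have "\<forall>i\<in>{1..r}. \<exists>m::int. \<omega> i * (2 * pi * of_int Q) = 2 * pi * of_int m"
  proof
    fix i assume "i \<in> {1..r}"
    then have "\<omega> i * of_int Q \<in> \<int>" using Q(2) by blast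
    then obtain m where "\<omega> i * of_int Q = of_int m" by (rule Ints_cases)
    then show "\<exists>m::int. \<omega> i * (2 * pi * of_int Q) = 2 * pi * of_int m"
      by (intro exI[of _ m]) (simp add: algebra_simps)
  qed
  moreover have "2 * pi * of_int Q > 0" using Q(1) by simp
  ultimately show ?thesis by blast
qed

end


context ES begin

definition Hf :: "real \<Rightarrow> real \<Rightarrow> 'a" where
  "Hf J0 \<theta> = (\<Sum>i\<in>{1..r}. sqrt (2 / \<omega> i) *\<^sub>R (sin (J0 + \<omega> i * \<theta>) *\<^sub>R b i 1 - cos (J0 + \<omega> i * \<theta>) *\<^sub>R b i 2))"

definition rf :: "real \<Rightarrow> 'a \<Rightarrow> real \<Rightarrow> real \<Rightarrow> real" where
  "rf J0 g0 \<theta>0 \<theta> = (\<Sum>i\<in>{1..r}. \<Sum>j\<in>{1,2}. ddither \<omega> i j J0 \<theta> * (g0 \<bullet> (Hf J0 \<theta> - Hf J0 \<theta>0)) * (g0 \<bullet> b i j))"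

lemma R_exists:
  assumes Tp: "\<forall>i\<in>{1..r}. \<exists>m::int. \<omega> i * Tp = 2 * pi * of_int m"
  shows "\<exists>R. (\<forall>\<theta>. (R has_real_derivative rf J0 g0 \<theta>0 \<theta>) (at \<theta>)) \<and>
     R (\<theta>0 + Tp) - R \<theta>0 = - Tp * (\<Sum>i\<in>{1..r}. \<Sum>j\<in>{1,2}. (g0 \<bullet> b i j)\<^sup>2)"
proof -
  define \<beta> where "\<beta> i j = g0 \<bullet> b i j" for i j
  define D where "D i \<theta> = - sqrt (2 * \<omega> i) * sin (J0 + \<omega> i * \<theta>) * \<beta> i 1 + sqrt (2 * \<omega> i) * cos (J0 + \<omega> i * \<theta>) * \<beta> i 2" for i \<theta>
  define S where "S k \<theta> = sqrt (2 / \<omega> k) * (sin (J0 + \<omega> k * \<theta>) * \<beta> k 1 - cos (J0 + \<omega> k * \<theta>) * \<beta> k 2)" for k \<theta>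
  define h0 where "h0 = g0 \<bullet> Hf J0 \<theta>0"
  have gH: "g0 \<bullet> Hf J0 \<theta> = (\<Sum>k\<in>{1..r}. S k \<theta>)" for \<theta>
    unfolding Hf_def S_def \<beta>_def by (simp add: inner_sum_right inner_diff_right algebra_simps)
  have rf_eq: "rf J0 g0 \<theta>0 \<theta> = (\<Sum>i\<in>{1..r}. \<Sum>k\<in>{1..r}. D i \<theta> * S k \<theta>) - h0 * (\<Sum>i\<in>{1..r}. D i \<theta>)" for \<theta>
  proof -
    have "rf J0 g0 \<theta>0 \<theta> = (\<Sum>i\<in>{1..r}. D i \<theta> * ((\<Sum>k\<in>{1..r}. S k \<theta>) - h0))"
      unfolding rf_def D_def h0_def inner_diff_right gH[symmetric]
      by (intro sum.cong refl) (simp add: ddither_def \<beta>_def algebra_simps)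
    also have "\<dots> = (\<Sum>i\<in>{1..r}. \<Sum>k\<in>{1..r}. D i \<theta> * S k \<theta>) - h0 * (\<Sum>i\<in>{1..r}. D i \<theta>)"
      by (simp add: right_diff_distrib sum_distrib_left sum_distrib_right sum_subtractf algebra_simps)
    finally show ?thesis .
  qed
  have "\<forall>i\<in>{1..r}. \<forall>k\<in>{1..r}. \<exists>F. (\<forall>\<theta>. (F has_real_derivative D i \<theta> * S k \<theta>) (at \<theta>)) \<and>
        (\<forall>\<theta>. F (\<theta> + Tp) - F \<theta> = (if \<omega> i = \<omega> k then - Tp * (\<beta> i 1 * \<beta> k 1 + \<beta> i 2 * \<beta> k 2) else 0))"
  proof (intro ballI)
    fix i k assume i: "i \<in> {1..r}" and k: "k \<in> {1..r}"
    obtain m where m: "\<omega> i * Tp = 2 * pi * of_int m" using Tp i by blast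
    obtain n where n: "\<omega> k * Tp = 2 * pi * of_int n" using Tp k by blast
    show "\<exists>F. (\<forall>\<theta>. (F has_real_derivative D i \<theta> * S k \<theta>) (at \<theta>)) \<and>
        (\<forall>\<theta>. F (\<theta> + Tp) - F \<theta> = (if \<omega> i = \<omega> k then - Tp * (\<beta> i 1 * \<beta> k 1 + \<beta> i 2 * \<beta> k 2) else 0))"
      using pair_antideriv[of "\<omega> i" "\<omega> k" Tp m n J0 "\<beta> i 1" "\<beta> i 2" "\<beta> k 1" "\<beta> k 2"] \<omega>_pos i k m n
      unfolding D_def S_def by auto
  qed
  then obtain F where F: "\<And>i k. i \<in> {1..r} \<Longrightarrow> k \<in> {1..r} \<Longrightarrow> (\<forall>\<theta>. (F i k has_real_derivative D i \<theta> * S k \<theta>) (at \<theta>)) \<and>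
        (\<forall>\<theta>. F i k (\<theta> + Tp) - F i k \<theta> = (if \<omega> i = \<omega> k then - Tp * (\<beta> i 1 * \<beta> k 1 + \<beta> i 2 * \<beta> k 2) else 0))"
    by metis
  have "\<forall>i\<in>{1..r}. \<exists>G. (\<forall>\<theta>. (G has_real_derivative D i \<theta>) (at \<theta>)) \<and> (\<forall>\<theta>. G (\<theta> + Tp) = G \<theta>)"
  proof
    fix i assume i: "i \<in> {1..r}"
    obtain m where m: "\<omega> i * Tp = 2 * pi * of_int m" using Tp i by blast
    show "\<exists>G. (\<forall>\<theta>. (G has_real_derivative D i \<theta>) (at \<theta>)) \<and> (\<forall>\<theta>. G (\<theta> + Tp) = G \<theta>)"
      using single_antideriv[of "\<omega> i" Tp m J0 "\<beta> i 1" "\<beta> i 2"] \<omega>_pos i m unfolding D_def by auto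
  qed
  then obtain G where G: "\<And>i. i \<in> {1..r} \<Longrightarrow> (\<forall>\<theta>. (G i has_real_derivative D i \<theta>) (at \<theta>)) \<and> (\<forall>\<theta>. G i (\<theta> + Tp) = G i \<theta>)"
    by metis
  define R where "R \<theta> = (\<Sum>i\<in>{1..r}. \<Sum>k\<in>{1..r}. F i k \<theta>) - h0 * (\<Sum>i\<in>{1..r}. G i \<theta>)" for \<theta>
  have "(R has_real_derivative rf J0 g0 \<theta>0 \<theta>) (at \<theta>)" for \<theta>
    unfolding R_def rf_eq
    by (intro DERIV_diff DERIV_sum DERIV_cmult) (use F G in auto)
  moreover have "R (\<theta>0 + Tp) - R \<theta>0 = - Tp * (\<Sum>i\<in>{1..r}. \<Sum>j\<in>{1,2}. (g0 \<bullet> b i j)\<^sup>2)"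
  proof -
    have "R (\<theta>0 + Tp) - R \<theta>0 = (\<Sum>i\<in>{1..r}. \<Sum>k\<in>{1..r}. F i k (\<theta>0 + Tp) - F i k \<theta>0) - h0 * (\<Sum>i\<in>{1..r}. G i (\<theta>0 + Tp) - G i \<theta>0)"
      unfolding R_def by (simp add: sum_subtractf algebra_simps)
    also have "\<dots> = (\<Sum>i\<in>{1..r}. \<Sum>k\<in>{1..r}. if k = i then - Tp * (\<beta> i 1 * \<beta> i 1 + \<beta> i 2 * \<beta> i 2) else 0)"
    proof -
      have "(\<Sum>i\<in>{1..r}. G i (\<theta>0 + Tp) - G i \<theta>0) = 0" using G by simp
      moreover have "(\<Sum>k\<in>{1..r}. F i k (\<theta>0 + Tp) - F i k \<theta>0) = (\<Sum>k\<in>{1..r}. if k = i then - Tp * (\<beta> i 1 * \<beta> i 1 + \<beta> i 2 * \<beta> i 2) else 0)"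
        if i: "i \<in> {1..r}" for i
      proof (intro sum.cong refl)
        fix k assume k: "k \<in> {1..r}"
        have "(\<omega> i = \<omega> k) = (k = i)" using \<omega>_inj i k by (auto dest: inj_onD)
        then show "F i k (\<theta>0 + Tp) - F i k \<theta>0 = (if k = i then - Tp * (\<beta> i 1 * \<beta> i 1 + \<beta> i 2 * \<beta> i 2) else 0)"
          using F[OF i k] by auto
      qed
      ultimately show ?thesis by simp
    qed
    also have "\<dots> = (\<Sum>i\<in>{1..r}. - Tp * (\<beta> i 1 * \<beta> i 1 + \<beta> i 2 * \<beta> i 2))"
      by (intro sum.cong refl) simp
    also have "\<dots> = - Tp * (\<Sum>i\<in>{1..r}. \<Sum>j\<in>{1,2}. (g0 \<bullet> b i j)\<^sup>2)"
      by (simp add: sum_distrib_left \<beta>_def power2_eq_square)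
    finally show ?thesis .
  qed
  ultimately show ?thesis by blast
qed

end


context ES begin

definition Ud :: "real \<Rightarrow> real \<Rightarrow> 'a" where
  "Ud y \<theta> = (\<Sum>i\<in>{1..r}. \<Sum>j\<in>{1,2}. dither \<omega> i j y \<theta> *\<^sub>R b i j)"

definition Bb :: real where
  "Bb = (\<Sum>i\<in>{1..r}. \<Sum>j\<in>{1,2}. sqrt (2 * \<omega> i) * norm (b i j))"

lemma \<omega>_nonneg: "i \<in> {1..r} \<Longrightarrow> \<omega> i \<ge> 0"
  using \<omega>_pos by (auto intro: less_imp_le)

lemma Bb_nonneg: "Bb \<ge> 0"
  unfolding Bb_def using \<omega>_nonneg by (auto intro!: sum_nonneg)

lemma es_rhs_Ud: "es_rhs b0 J xs r b \<omega> \<epsilon> x \<tau> = b0 (x + xs) + (1 / \<epsilon>) *\<^sub>R Ud (J (x + xs)) \<tau>"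
  unfolding es_rhs_def Ud_def ..

lemma Ud_bound: "norm (Ud y \<theta>) \<le> Bb"
  unfolding Ud_def Bb_def
  apply (rule order_trans[OF norm_sum], rule sum_mono)
  apply (rule order_trans[OF norm_sum], rule sum_mono)
  using dither_bound \<omega>_nonneg by (auto intro!: mult_right_mono)

lemma Ud_lip: "norm (Ud y \<theta> - Ud y' \<theta>) \<le> Bb * \<bar>y - y'\<bar>"
proof -
  have "Ud y \<theta> - Ud y' \<theta> = (\<Sum>i\<in>{1..r}. \<Sum>j\<in>{1,2}. (dither \<omega> i j y \<theta> - dither \<omega> i j y' \<theta>) *\<^sub>R b i j)"
    unfolding Ud_def by (simp add: sum_subtractf scaleR_diff_left)
  also have "norm \<dots> \<le> (\<Sum>i\<in>{1..r}. \<Sum>j\<in>{1,2}. (sqrt (2 * \<omega> i) * norm (b i j)) * \<bar>y - y'\<bar>)"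
    apply (rule order_trans[OF norm_sum], rule sum_mono)
    apply (rule order_trans[OF norm_sum], rule sum_mono)
  proof -
    fix i j assume i: "i \<in> {1..r}"
    have "\<bar>dither \<omega> i j y \<theta> - dither \<omega> i j y' \<theta>\<bar> \<le> sqrt (2 * \<omega> i) * \<bar>y - y'\<bar>"
      by (rule dither_lip) (rule \<omega>_nonneg[OF i])
    then have "\<bar>dither \<omega> i j y \<theta> - dither \<omega> i j y' \<theta>\<bar> * norm (b i j) \<le> (sqrt (2 * \<omega> i) * \<bar>y - y'\<bar>) * norm (b i j)"
      by (rule mult_right_mono) simp
    then show "norm ((dither \<omega> i j y \<theta> - dither \<omega> i j y' \<theta>) *\<^sub>R b i j) \<le> sqrt (2 * \<omega> i) * norm (b i j) * \<bar>y - y'\<bar>"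
      by (simp only: norm_scaleR real_norm_def) (simp add: mult_ac)
  qed
  also have "\<dots> = Bb * \<bar>y - y'\<bar>" unfolding Bb_def by (simp add: sum_distrib_right sum_distrib_left algebra_simps)
  finally show ?thesis .
qed

lemma Hf_deriv: "(Hf J0 has_vector_derivative Ud J0 \<theta>) (at \<theta>)"
  unfolding Hf_def[abs_def] Ud_def
  apply (rule derivative_eq_intros refl)+
  apply (rule sum.cong[OF refl])
  subgoal for i
  proof -
    assume i: "i \<in> {1..r}"
    then have w: "\<omega> i > 0" using \<omega>_pos by auto
    have e: "sqrt (2 * \<omega> i) = sqrt (2 / \<omega> i) * \<omega> i" by (rule sqrt_omega[OF w, symmetric])
    show ?thesis unfolding dither_def e by (simp add: algebra_simps)
  qed
  done

lemma Hf_per: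
  assumes Tp: "\<forall>i\<in>{1..r}. \<exists>m::int. \<omega> i * Tp = 2 * pi * of_int m"
  shows "Hf J0 (\<theta> + Tp) = Hf J0 \<theta>"
  unfolding Hf_def
proof (intro sum.cong refl)
  fix i assume "i \<in> {1..r}"
  then obtain m where m: "\<omega> i * Tp = 2 * pi * of_int m" using Tp by blast
  show "sqrt (2 / \<omega> i) *\<^sub>R (sin (J0 + \<omega> i * (\<theta> + Tp)) *\<^sub>R b i 1 - cos (J0 + \<omega> i * (\<theta> + Tp)) *\<^sub>R b i 2)
      = sqrt (2 / \<omega> i) *\<^sub>R (sin (J0 + \<omega> i * \<theta>) *\<^sub>R b i 1 - cos (J0 + \<omega> i * \<theta>) *\<^sub>R b i 2)"
    by (simp only: sin_per[OF m] cos_per[OF m])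
qed

definition cA :: real where "cA = \<kappa>3 * M + Bb"

lemma cA_nonneg: "cA \<ge> 0"
  unfolding cA_def using k3 M Bb_nonneg by simp

lemma b0_bound: "norm (b0 x) \<le> \<kappa>3 * M"
  using k3(2)[rule_format, of x] dJ_le[of x] k3(1) by (meson mult_left_mono less_imp_le order_trans)

lemma rhs_bound:
  assumes "0 < \<epsilon>" "\<epsilon> \<le> 1"
  shows "norm (es_rhs b0 J xs r b \<omega> \<epsilon> x \<tau>) \<le> cA / \<epsilon>"
proof -
  have "norm (es_rhs b0 J xs r b \<omega> \<epsilon> x \<tau>) \<le> norm (b0 (x + xs)) + norm ((1 / \<epsilon>) *\<^sub>R Ud (J (x + xs)) \<tau>)"
    unfolding es_rhs_Ud by (rule norm_triangle_ineq)
  also have "\<dots> \<le> \<kappa>3 * M / \<epsilon> + Bb / \<epsilon>"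
  proof (rule add_mono)
    have "\<kappa>3 * M \<le> \<kappa>3 * M / \<epsilon>" using assms k3 M by (simp add: field_simps)
    then show "norm (b0 (x + xs)) \<le> \<kappa>3 * M / \<epsilon>" using b0_bound[of "x + xs"] by linarith
    show "norm ((1 / \<epsilon>) *\<^sub>R Ud (J (x + xs)) \<tau>) \<le> Bb / \<epsilon>"
      using Ud_bound[of "J (x + xs)" \<tau>] assms by (simp add: divide_right_mono)
  qed
  also have "\<dots> = cA / \<epsilon>" unfolding cA_def by (simp add: add_divide_distrib)
  finally show ?thesis .
qed

lemma bracket_bound:
  assumes g0: "norm g0 \<le> M"
  shows "\<bar>(\<Sum>i\<in>{1..r}. \<Sum>j\<in>{1,2}. (g0 \<bullet> b i j) * (dither \<omega> i j y \<theta> - dither \<omega> i j y0 \<theta> - ddither \<omega> i j y0 \<theta> * w))\<bar>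
      \<le> M * Bb * ((y - y0)^2 + \<bar>y - y0 - w\<bar>)"
proof -
  have "\<bar>(\<Sum>i\<in>{1..r}. \<Sum>j\<in>{1,2}. (g0 \<bullet> b i j) * (dither \<omega> i j y \<theta> - dither \<omega> i j y0 \<theta> - ddither \<omega> i j y0 \<theta> * w))\<bar>
     \<le> (\<Sum>i\<in>{1..r}. \<Sum>j\<in>{1,2}. (M * (sqrt (2 * \<omega> i) * norm (b i j))) * ((y - y0)^2 + \<bar>y - y0 - w\<bar>))"
    apply (rule order_trans[OF sum_abs], rule sum_mono)
    apply (rule order_trans[OF sum_abs], rule sum_mono)
  proof -
    fix i j assume i: "i \<in> {1..r}"
    have w: "\<omega> i \<ge> 0" using \<omega>_nonneg[OF i] .
    have b1: "\<bar>g0 \<bullet> b i j\<bar> \<le> M * norm (b i j)"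
      using Cauchy_Schwarz_ineq2[of g0 "b i j"] g0 by (meson mult_right_mono norm_ge_zero order_trans)
    have "dither \<omega> i j y \<theta> - dither \<omega> i j y0 \<theta> - ddither \<omega> i j y0 \<theta> * w
        = (dither \<omega> i j y \<theta> - dither \<omega> i j y0 \<theta> - ddither \<omega> i j y0 \<theta> * (y - y0)) + ddither \<omega> i j y0 \<theta> * (y - y0 - w)"
      by (simp add: algebra_simps)
    also have "\<bar>\<dots>\<bar> \<le> sqrt (2 * \<omega> i) * (y - y0)^2 + sqrt (2 * \<omega> i) * \<bar>y - y0 - w\<bar>"
      by (rule order_trans[OF abs_triangle_ineq add_mono[OF dither_taylor[of \<omega> i, OF w]]])
         (simp add: abs_mult mult_right_mono ddither_bound[of \<omega> i, OF w])
    finally have b2: "\<bar>dither \<omega> i j y \<theta> - dither \<omega> i j y0 \<theta> - ddither \<omega> i j y0 \<theta> * w\<bar> \<le> sqrt (2 * \<omega> i) * ((y - y0)^2 + \<bar>y - y0 - w\<bar>)"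
      by (simp add: algebra_simps)
    have "\<bar>(g0 \<bullet> b i j) * (dither \<omega> i j y \<theta> - dither \<omega> i j y0 \<theta> - ddither \<omega> i j y0 \<theta> * w)\<bar>
        \<le> (M * norm (b i j)) * (sqrt (2 * \<omega> i) * ((y - y0)^2 + \<bar>y - y0 - w\<bar>))"
      unfolding abs_mult by (rule mult_mono[OF b1 b2]) (use M in auto)
    then show "\<bar>(g0 \<bullet> b i j) * (dither \<omega> i j y \<theta> - dither \<omega> i j y0 \<theta> - ddither \<omega> i j y0 \<theta> * w)\<bar>
        \<le> (M * (sqrt (2 * \<omega> i) * norm (b i j))) * ((y - y0)^2 + \<bar>y - y0 - w\<bar>)"
      by (simp add: algebra_simps)
  qed
  also have "\<dots> = M * Bb * ((y - y0)^2 + \<bar>y - y0 - w\<bar>)"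
    unfolding Bb_def by (simp add: sum_distrib_right sum_distrib_left algebra_simps)
  finally show ?thesis .
qed

end


context ES begin

definition cA2 :: "real \<Rightarrow> real" where "cA2 Tp = \<kappa>3 * M + Bb * M * cA * Tp"
definition cK3 :: "real \<Rightarrow> real" where
  "cK3 Tp = M * L0 * cA * Tp + M * Bb * ((M\<^sup>2 + LJ) * (cA * Tp)\<^sup>2 + M * cA2 Tp * Tp)"
definition cK :: "real \<Rightarrow> real" where "cK Tp = cK3 Tp + LJ * (cA2 Tp)\<^sup>2 * Tp"

lemma Xmove:
  assumes \<epsilon>: "0 < \<epsilon>" "\<epsilon> \<le> 1" and t0: "t0 \<ge> 0"
    and dX: "\<And>t. t \<ge> 0 \<Longrightarrow> (X has_vector_derivative es_rhs b0 J xs r b \<omega> \<epsilon> (X t) (\<tau>0 + t / \<epsilon>\<^sup>2)) (at t within {0..})"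
    and t: "t0 \<le> t" "t \<le> t0 + \<epsilon>\<^sup>2 * Tp"
  shows "norm (X t - X t0) \<le> cA * \<epsilon> * Tp"
proof -
  have "norm (X t - X t0) \<le> (cA / \<epsilon>) * (t - t0)"
  proof (rule vec_bound[OF t(1)])
    fix s assume s: "s \<in> {t0..t}"
    show "(X has_vector_derivative es_rhs b0 J xs r b \<omega> \<epsilon> (X s) (\<tau>0 + s / \<epsilon>\<^sup>2)) (at s within {t0..t})"
      by (rule has_vector_derivative_within_subset[OF dX]) (use s t0 in auto)
    show "norm (es_rhs b0 J xs r b \<omega> \<epsilon> (X s) (\<tau>0 + s / \<epsilon>\<^sup>2)) \<le> cA / \<epsilon>" by (rule rhs_bound[OF \<epsilon>])
  qed
  also have "\<dots> \<le> (cA / \<epsilon>) * (\<epsilon>\<^sup>2 * Tp)"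
    using t cA_nonneg \<epsilon> by (intro mult_left_mono) auto
  also have "\<dots> = cA * \<epsilon> * Tp" using \<epsilon> by (simp add: power2_eq_square)
  finally show ?thesis .
qed

lemma vd_scale: "(f has_vector_derivative f') F \<Longrightarrow> ((\<lambda>x. c *\<^sub>R f x) has_vector_derivative c *\<^sub>R f') F"
  by (rule bounded_linear.has_vector_derivative[OF bounded_linear_scaleR_right])

lemma tau_deriv: "((\<lambda>t. \<tau>0 + t / \<epsilon>\<^sup>2) has_vector_derivative 1 / \<epsilon>\<^sup>2) (at t within S)"
proof -
  have "((\<lambda>t. \<tau>0 + (1 / \<epsilon>\<^sup>2) *\<^sub>R t) has_vector_derivative 0 + (1 / \<epsilon>\<^sup>2) *\<^sub>R 1) (at t within S)"
    by (intro has_vector_derivative_add has_vector_derivative_const vd_scale has_vector_derivative_id)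
  then show ?thesis by simp
qed

lemma Hcomp_deriv:
  "((\<lambda>t. Hf J0 (\<tau>0 + t / \<epsilon>\<^sup>2)) has_vector_derivative (1 / \<epsilon>\<^sup>2) *\<^sub>R Ud J0 (\<tau>0 + t / \<epsilon>\<^sup>2)) (at t within S)"
proof -
  have "((Hf J0 \<circ> (\<lambda>t. \<tau>0 + t / \<epsilon>\<^sup>2)) has_vector_derivative (1 / \<epsilon>\<^sup>2) *\<^sub>R Ud J0 (\<tau>0 + t / \<epsilon>\<^sup>2)) (at t within S)"
    by (rule vector_diff_chain_within[OF tau_deriv has_vector_derivative_at_within[OF Hf_deriv]])
  then show ?thesis by (simp add: o_def)
qed

lemma stepA:
  assumes \<epsilon>: "0 < \<epsilon>" "\<epsilon> \<le> 1" and t0: "t0 \<ge> 0"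
    and dX: "\<And>t. t \<ge> 0 \<Longrightarrow> (X has_vector_derivative es_rhs b0 J xs r b \<omega> \<epsilon> (X t) (\<tau>0 + t / \<epsilon>\<^sup>2)) (at t within {0..})"
    and s: "t0 \<le> s" "s \<le> t0 + \<epsilon>\<^sup>2 * Tp"
  shows "norm (X s - X t0 - \<epsilon> *\<^sub>R (Hf (J (X t0 + xs)) (\<tau>0 + s / \<epsilon>\<^sup>2) - Hf (J (X t0 + xs)) (\<tau>0 + t0 / \<epsilon>\<^sup>2))) \<le> cA2 Tp * (s - t0)"
proof -
  define J0 where "J0 = J (X t0 + xs)"
  define g where "g t = X t - \<epsilon> *\<^sub>R Hf J0 (\<tau>0 + t / \<epsilon>\<^sup>2)" for t
  define g' where "g' t = b0 (X t + xs) + (1 / \<epsilon>) *\<^sub>R (Ud (J (X t + xs)) (\<tau>0 + t / \<epsilon>\<^sup>2) - Ud J0 (\<tau>0 + t / \<epsilon>\<^sup>2))" for t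
  have "norm (g s - g t0) \<le> cA2 Tp * (s - t0)"
  proof (rule vec_bound[OF s(1)])
    fix t assume t: "t \<in> {t0..s}"
    have dXt: "(X has_vector_derivative es_rhs b0 J xs r b \<omega> \<epsilon> (X t) (\<tau>0 + t / \<epsilon>\<^sup>2)) (at t within {t0..s})"
      by (rule has_vector_derivative_within_subset[OF dX]) (use t t0 in auto)
    have "(g has_vector_derivative es_rhs b0 J xs r b \<omega> \<epsilon> (X t) (\<tau>0 + t / \<epsilon>\<^sup>2) - \<epsilon> *\<^sub>R ((1 / \<epsilon>\<^sup>2) *\<^sub>R Ud J0 (\<tau>0 + t / \<epsilon>\<^sup>2))) (at t within {t0..s})"
      unfolding g_def by (intro has_vector_derivative_diff dXt vd_scale Hcomp_deriv)
    moreover have "es_rhs b0 J xs r b \<omega> \<epsilon> (X t) (\<tau>0 + t / \<epsilon>\<^sup>2) - \<epsilon> *\<^sub>R ((1 / \<epsilon>\<^sup>2) *\<^sub>R Ud J0 (\<tau>0 + t / \<epsilon>\<^sup>2)) = g' t"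
      unfolding es_rhs_Ud g'_def using \<epsilon> by (simp add: power2_eq_square scaleR_diff_right)
    ultimately show "(g has_vector_derivative g' t) (at t within {t0..s})" by simp
    have mv: "norm (X t - X t0) \<le> cA * \<epsilon> * Tp" by (rule Xmove[OF \<epsilon> t0 dX]) (use t s in auto)
    have "norm (g' t) \<le> norm (b0 (X t + xs)) + (1 / \<epsilon>) * norm (Ud (J (X t + xs)) (\<tau>0 + t / \<epsilon>\<^sup>2) - Ud J0 (\<tau>0 + t / \<epsilon>\<^sup>2))"
      unfolding g'_def using \<epsilon> by (metis norm_scaleR norm_triangle_ineq abs_of_pos zero_less_divide_1_iff)
    also have "\<dots> \<le> \<kappa>3 * M + (1 / \<epsilon>) * (Bb * (M * (cA * \<epsilon> * Tp)))"
    proof (rule add_mono[OF b0_bound], rule mult_left_mono)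
      have "norm (Ud (J (X t + xs)) (\<tau>0 + t / \<epsilon>\<^sup>2) - Ud J0 (\<tau>0 + t / \<epsilon>\<^sup>2)) \<le> Bb * \<bar>J (X t + xs) - J0\<bar>" by (rule Ud_lip)
      also have "\<dots> \<le> Bb * (M * norm (X t - X t0))"
        unfolding J0_def using J_lip[of "X t + xs" "X t0 + xs"] Bb_nonneg by (auto intro: mult_left_mono)
      also have "\<dots> \<le> Bb * (M * (cA * \<epsilon> * Tp))" using mv Bb_nonneg M by (auto intro!: mult_left_mono)
      finally show "norm (Ud (J (X t + xs)) (\<tau>0 + t / \<epsilon>\<^sup>2) - Ud J0 (\<tau>0 + t / \<epsilon>\<^sup>2)) \<le> Bb * (M * (cA * \<epsilon> * Tp))" .
    qed (use \<epsilon> in auto)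
    also have "\<dots> = cA2 Tp" unfolding cA2_def using \<epsilon> by (simp add: field_simps)
    finally show "norm (g' t) \<le> cA2 Tp" .
  qed
  moreover have "g s - g t0 = X s - X t0 - \<epsilon> *\<^sub>R (Hf J0 (\<tau>0 + s / \<epsilon>\<^sup>2) - Hf J0 (\<tau>0 + t0 / \<epsilon>\<^sup>2))"
    unfolding g_def by (simp add: scaleR_diff_right algebra_simps)
  ultimately show ?thesis unfolding J0_def by simp
qed

end


context ES begin

lemma inner_Ud: "g0 \<bullet> Ud y \<theta> = (\<Sum>i\<in>{1..r}. \<Sum>j\<in>{1,2}. (g0 \<bullet> b i j) * dither \<omega> i j y \<theta>)"
  unfolding Ud_def by (simp add: inner_sum_right inner_add_right mult.commute)

lemma cA2_nonneg: "Tp \<ge> 0 \<Longrightarrow> cA2 Tp \<ge> 0"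
  unfolding cA2_def using k3 M Bb_nonneg cA_nonneg by simp

lemma vd_scale_left: "(f has_vector_derivative f') F \<Longrightarrow> ((\<lambda>x. f x *\<^sub>R c) has_vector_derivative f' *\<^sub>R c) F"
  by (rule bounded_linear.has_vector_derivative[OF bounded_linear_scaleR_left])

lemma vd_rmult: "(f has_vector_derivative f') F \<Longrightarrow> ((\<lambda>x. c * f x) has_vector_derivative c * f') F"
  for f :: "real \<Rightarrow> real"
  using vd_scale[of f f' F c] by simp

lemma vd_rmult_left: "(f has_vector_derivative f') F \<Longrightarrow> ((\<lambda>x. f x * c) has_vector_derivative f' * c) F"
  for f :: "real \<Rightarrow> real"
  using vd_scale_left[of f f' F c] by simp

lemma vd_inner: "(f has_vector_derivative f') F \<Longrightarrow> ((\<lambda>x. g \<bullet> f x) has_vector_derivative g \<bullet> f') F"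
  using bounded_linear.has_vector_derivative[OF bounded_linear_inner_right] by blast

lemma period_est:
  assumes Tp: "Tp > 0" "\<forall>i\<in>{1..r}. \<exists>m::int. \<omega> i * Tp = 2 * pi * of_int m"
    and \<epsilon>: "0 < \<epsilon>" "\<epsilon> \<le> 1" and t0: "t0 \<ge> 0"
    and dX: "\<And>t. t \<ge> 0 \<Longrightarrow> (X has_vector_derivative es_rhs b0 J xs r b \<omega> \<epsilon> (X t) (\<tau>0 + t / \<epsilon>\<^sup>2)) (at t within {0..})"
  shows "J (X (t0 + \<epsilon>\<^sup>2 * Tp) + xs) - J (X t0 + xs)
     \<le> - (\<epsilon>\<^sup>2 * Tp) * (\<gamma> - \<kappa>3) * (norm (dJ (X t0 + xs)))\<^sup>2 + (\<epsilon>\<^sup>2 * Tp) * (cK Tp * \<epsilon>)"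
proof -
  define P where "P = \<epsilon>\<^sup>2 * Tp"
  have P: "P > 0" unfolding P_def using Tp \<epsilon> by simp
  define x0 where "x0 = X t0"
  define J0 where "J0 = J (x0 + xs)"
  define g0 where "g0 = dJ (x0 + xs)"
  define \<theta>0 where "\<theta>0 = (\<tau>0 + t0 / \<epsilon>\<^sup>2)"
  define S2 where "S2 = (\<Sum>i\<in>{1..r}. \<Sum>j\<in>{1,2}. (g0 \<bullet> b i j)\<^sup>2)"
  have g0M: "norm g0 \<le> M" unfolding g0_def by (rule dJ_le)
  obtain R where R: "\<And>\<theta>. (R has_real_derivative rf J0 g0 \<theta>0 \<theta>) (at \<theta>)" "R (\<theta>0 + Tp) - R \<theta>0 = - Tp * S2"
    using R_exists[OF Tp(2), of J0 g0 \<theta>0] unfolding S2_def by blast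
  define z where "z t = g0 \<bullet> (X t - x0) - \<epsilon> * (g0 \<bullet> (Hf J0 ((\<tau>0 + t / \<epsilon>\<^sup>2)) - Hf J0 \<theta>0)) - (t - t0) * (g0 \<bullet> b0 (x0 + xs))
      - \<epsilon>\<^sup>2 * (R ((\<tau>0 + t / \<epsilon>\<^sup>2)) - R \<theta>0)" for t
  define z' where "z' t = g0 \<bullet> (b0 (X t + xs) - b0 (x0 + xs)) + (1 / \<epsilon>) * (\<Sum>i\<in>{1..r}. \<Sum>j\<in>{1,2}. (g0 \<bullet> b i j) *
      (dither \<omega> i j (J (X t + xs)) ((\<tau>0 + t / \<epsilon>\<^sup>2)) - dither \<omega> i j J0 ((\<tau>0 + t / \<epsilon>\<^sup>2)) - ddither \<omega> i j J0 ((\<tau>0 + t / \<epsilon>\<^sup>2)) * (\<epsilon> * (g0 \<bullet> (Hf J0 ((\<tau>0 + t / \<epsilon>\<^sup>2)) - Hf J0 \<theta>0)))))" for t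
  have t1: "(\<tau>0 + (t0 + P) / \<epsilon>\<^sup>2) = \<theta>0 + Tp" unfolding \<theta>0_def P_def using \<epsilon> by (simp add: field_simps)
  have zb: "norm (z (t0 + P) - z t0) \<le> (\<epsilon> * cK3 Tp) * ((t0 + P) - t0)"
  proof (rule vec_bound)
    show "t0 \<le> t0 + P" using P by simp
    fix t assume t: "t \<in> {t0..t0 + P}"
    have dXt: "(X has_vector_derivative es_rhs b0 J xs r b \<omega> \<epsilon> (X t) ((\<tau>0 + t / \<epsilon>\<^sup>2))) (at t within {t0..t0 + P})"
      by (rule has_vector_derivative_within_subset[OF dX]) (use t t0 in auto)
    have dR: "((\<lambda>t. R ((\<tau>0 + t / \<epsilon>\<^sup>2))) has_vector_derivative (1 / \<epsilon>\<^sup>2) *\<^sub>R rf J0 g0 \<theta>0 ((\<tau>0 + t / \<epsilon>\<^sup>2))) (at t within {t0..t0 + P})"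
    proof -
      have "((R \<circ> (\<lambda>t. \<tau>0 + t / \<epsilon>\<^sup>2)) has_vector_derivative (1 / \<epsilon>\<^sup>2) *\<^sub>R rf J0 g0 \<theta>0 ((\<tau>0 + t / \<epsilon>\<^sup>2))) (at t within {t0..t0 + P})"
        
        by (rule vector_diff_chain_within[OF tau_deriv has_vector_derivative_at_within])
           (use R(1) in \<open>simp add: has_real_derivative_iff_has_vector_derivative\<close>)
      then show ?thesis by (simp add: o_def)
    qed
    have e1: "(\<Sum>i\<in>{1..r}. \<Sum>j\<in>{1,2}. (g0 \<bullet> b i j) *
          (dither \<omega> i j (J (X t + xs)) (\<tau>0 + t / \<epsilon>\<^sup>2) - dither \<omega> i j J0 (\<tau>0 + t / \<epsilon>\<^sup>2) - ddither \<omega> i j J0 (\<tau>0 + t / \<epsilon>\<^sup>2) * (\<epsilon> * (g0 \<bullet> (Hf J0 (\<tau>0 + t / \<epsilon>\<^sup>2) - Hf J0 \<theta>0)))))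
        = g0 \<bullet> Ud (J (X t + xs)) (\<tau>0 + t / \<epsilon>\<^sup>2) - g0 \<bullet> Ud J0 (\<tau>0 + t / \<epsilon>\<^sup>2) - \<epsilon> * rf J0 g0 \<theta>0 (\<tau>0 + t / \<epsilon>\<^sup>2)"
    proof -
      let ?h = "g0 \<bullet> (Hf J0 (\<tau>0 + t / \<epsilon>\<^sup>2) - Hf J0 \<theta>0)"
      let ?s = "\<tau>0 + t / \<epsilon>\<^sup>2"
      have "g0 \<bullet> Ud (J (X t + xs)) ?s - g0 \<bullet> Ud J0 ?s - \<epsilon> * rf J0 g0 \<theta>0 ?s
        = (\<Sum>i\<in>{1..r}. (\<Sum>j\<in>{1,2}. (g0 \<bullet> b i j) * dither \<omega> i j (J (X t + xs)) ?s)
             - (\<Sum>j\<in>{1,2}. (g0 \<bullet> b i j) * dither \<omega> i j J0 ?s)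
             - \<epsilon> * (\<Sum>j\<in>{1,2}. ddither \<omega> i j J0 ?s * ?h * (g0 \<bullet> b i j)))"
        unfolding inner_Ud rf_def by (simp only: sum_subtractf sum_distrib_left)
      also have "\<dots> = (\<Sum>i\<in>{1..r}. \<Sum>j\<in>{1,2}. (g0 \<bullet> b i j) *
          (dither \<omega> i j (J (X t + xs)) ?s - dither \<omega> i j J0 ?s - ddither \<omega> i j J0 ?s * (\<epsilon> * ?h)))"
        by (intro sum.cong refl) (simp add: algebra_simps)
      finally show ?thesis by simp
    qed
    show "(z has_vector_derivative z' t) (at t within {t0..t0 + P})"
      unfolding z_def[abs_def]
      apply (rule has_vector_derivative_eq_rhs)
       apply (rule has_vector_derivative_diff)+
          apply (rule vd_inner, rule has_vector_derivative_diff, rule dXt, rule has_vector_derivative_const)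
         apply (rule vd_rmult, rule vd_inner, rule has_vector_derivative_diff, rule Hcomp_deriv, rule has_vector_derivative_const)
        apply (rule vd_rmult_left, rule has_vector_derivative_diff, rule has_vector_derivative_id, rule has_vector_derivative_const)
       apply (rule vd_rmult, rule has_vector_derivative_diff, rule dR, rule has_vector_derivative_const)
      unfolding z'_def e1 es_rhs_Ud using \<epsilon>
      by (simp add: inner_add_right inner_diff_right power2_eq_square field_simps)
    have mv: "norm (X t - x0) \<le> cA * \<epsilon> * Tp" unfolding x0_def by (rule Xmove[OF \<epsilon> t0 dX]) (use t P_def in auto)
    have sA: "norm (X t - x0 - \<epsilon> *\<^sub>R (Hf J0 ((\<tau>0 + t / \<epsilon>\<^sup>2)) - Hf J0 \<theta>0)) \<le> cA2 Tp * (t - t0)"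
      unfolding x0_def J0_def \<theta>0_def by (rule stepA[OF \<epsilon> t0 dX]) (use t P_def in auto)
    have sA': "norm (X t - x0 - \<epsilon> *\<^sub>R (Hf J0 ((\<tau>0 + t / \<epsilon>\<^sup>2)) - Hf J0 \<theta>0)) \<le> cA2 Tp * (\<epsilon>\<^sup>2 * Tp)"
      using sA t cA2_nonneg[of Tp] Tp unfolding P_def by (smt (verit) atLeastAtMost_iff mult_left_mono)
    define \<Delta> where "\<Delta> = X t - x0"
    define y where "y = J (X t + xs)"
    define w where "w = \<epsilon> * (g0 \<bullet> (Hf J0 ((\<tau>0 + t / \<epsilon>\<^sup>2)) - Hf J0 \<theta>0))"
    have b1: "\<bar>g0 \<bullet> (b0 (X t + xs) - b0 (x0 + xs))\<bar> \<le> M * L0 * cA * Tp * \<epsilon>"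
    proof -
      have "\<bar>g0 \<bullet> (b0 (X t + xs) - b0 (x0 + xs))\<bar> \<le> norm g0 * norm (b0 (X t + xs) - b0 (x0 + xs))"
        by (rule Cauchy_Schwarz_ineq2)
      also have "\<dots> \<le> M * (L0 * norm (X t - x0))"
        using L0(2)[rule_format, of "X t + xs" "x0 + xs"] g0M M by (intro mult_mono) auto
      also have "\<dots> \<le> M * (L0 * (cA * \<epsilon> * Tp))" using mv M L0 by (intro mult_left_mono) auto
      finally show ?thesis by (simp add: algebra_simps)
    qed
    have yJ: "(y - J0)^2 \<le> M\<^sup>2 * (cA * \<epsilon> * Tp)\<^sup>2"
    proof -
      have "\<bar>y - J0\<bar> \<le> M * (cA * \<epsilon> * Tp)"
        unfolding y_def J0_def using J_lip[of "X t + xs" "x0 + xs"] mv M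
        by (smt (verit, best) add_diff_cancel_right mult_left_mono)
      then have "\<bar>y - J0\<bar>^2 \<le> (M * (cA * \<epsilon> * Tp))^2" by (rule power_mono) simp
      then show ?thesis by (simp add: power_mult_distrib)
    qed
    have yw: "\<bar>y - J0 - w\<bar> \<le> LJ * (cA * \<epsilon> * Tp)\<^sup>2 + M * (cA2 Tp * (\<epsilon>\<^sup>2 * Tp))"
    proof -
      have "y - J0 - w = (y - J0 - g0 \<bullet> \<Delta>) + g0 \<bullet> (X t - x0 - \<epsilon> *\<^sub>R (Hf J0 ((\<tau>0 + t / \<epsilon>\<^sup>2)) - Hf J0 \<theta>0))"
        unfolding w_def \<Delta>_def by (simp add: inner_diff_right algebra_simps)
      moreover have "\<bar>y - J0 - g0 \<bullet> \<Delta>\<bar> \<le> LJ * (cA * \<epsilon> * Tp)\<^sup>2"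
      proof -
        have "\<bar>y - J0 - g0 \<bullet> \<Delta>\<bar> \<le> LJ * (norm \<Delta>)^2"
          unfolding y_def J0_def g0_def \<Delta>_def using J_taylor[of "X t + xs" "x0 + xs"] by simp
        also have "\<dots> \<le> LJ * (cA * \<epsilon> * Tp)\<^sup>2"
          using mv LJ unfolding \<Delta>_def by (intro mult_left_mono power_mono) auto
        finally show ?thesis .
      qed
      moreover have "\<bar>g0 \<bullet> (X t - x0 - \<epsilon> *\<^sub>R (Hf J0 ((\<tau>0 + t / \<epsilon>\<^sup>2)) - Hf J0 \<theta>0))\<bar> \<le> M * (cA2 Tp * (\<epsilon>\<^sup>2 * Tp))"
        using Cauchy_Schwarz_ineq2[of g0 "X t - x0 - \<epsilon> *\<^sub>R (Hf J0 ((\<tau>0 + t / \<epsilon>\<^sup>2)) - Hf J0 \<theta>0)"] g0M sA'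
        by (smt (verit, best) mult_mono norm_ge_zero)
      ultimately show ?thesis by linarith
    qed
    have b2: "\<bar>(\<Sum>i\<in>{1..r}. \<Sum>j\<in>{1,2}. (g0 \<bullet> b i j) * (dither \<omega> i j y ((\<tau>0 + t / \<epsilon>\<^sup>2)) - dither \<omega> i j J0 ((\<tau>0 + t / \<epsilon>\<^sup>2)) - ddither \<omega> i j J0 ((\<tau>0 + t / \<epsilon>\<^sup>2)) * w))\<bar>
        \<le> M * Bb * (M\<^sup>2 * (cA * \<epsilon> * Tp)\<^sup>2 + (LJ * (cA * \<epsilon> * Tp)\<^sup>2 + M * (cA2 Tp * (\<epsilon>\<^sup>2 * Tp))))"
      by (rule order_trans[OF bracket_bound[OF g0M]]) (use yJ yw M Bb_nonneg in \<open>auto intro!: mult_left_mono add_mono\<close>)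
    have "\<bar>z' t\<bar> \<le> M * L0 * cA * Tp * \<epsilon> + (1 / \<epsilon>) * (M * Bb * (M\<^sup>2 * (cA * \<epsilon> * Tp)\<^sup>2 + (LJ * (cA * \<epsilon> * Tp)\<^sup>2 + M * (cA2 Tp * (\<epsilon>\<^sup>2 * Tp)))))"
      unfolding z'_def y_def[symmetric] w_def[symmetric]
      by (rule order_trans[OF abs_triangle_ineq add_mono[OF b1]]) (use b2 \<epsilon> in \<open>auto simp: abs_mult intro!: divide_right_mono\<close>)
    also have "\<dots> = \<epsilon> * cK3 Tp" unfolding cK3_def using \<epsilon> by (simp add: power2_eq_square field_simps)
    finally show "norm (z' t) \<le> \<epsilon> * cK3 Tp" by simp
  qed
  have z0: "z t0 = 0" unfolding z_def \<theta>0_def x0_def by simp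
  have Hp: "Hf J0 (\<theta>0 + Tp) = Hf J0 \<theta>0" by (rule Hf_per[OF Tp(2)])
  define \<Delta>1 where "\<Delta>1 = X (t0 + P) - x0"
  have zP: "z (t0 + P) = g0 \<bullet> \<Delta>1 - P * (g0 \<bullet> b0 (x0 + xs)) + P * S2"
  proof -
    have "z (t0 + P) = g0 \<bullet> \<Delta>1 - \<epsilon> * (g0 \<bullet> (Hf J0 (\<theta>0 + Tp) - Hf J0 \<theta>0)) - P * (g0 \<bullet> b0 (x0 + xs))
        - \<epsilon>\<^sup>2 * (R (\<theta>0 + Tp) - R \<theta>0)"
      unfolding z_def t1 \<Delta>1_def by simp
    then show ?thesis unfolding Hp R(2) P_def by (simp add: algebra_simps)
  qed
  have d1: "norm \<Delta>1 \<le> cA2 Tp * P"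
    using stepA[OF \<epsilon> t0 dX, of "t0 + P" Tp] P unfolding P_def \<Delta>1_def x0_def J0_def[symmetric]
    by (simp add: t1[unfolded \<theta>0_def P_def x0_def] Hp[unfolded \<theta>0_def J0_def x0_def])
  have S2: "S2 \<ge> \<gamma> * (norm g0)\<^sup>2" using exc[rule_format, of g0] unfolding S2_def by (simp add: inner_commute)
  have gb: "g0 \<bullet> b0 (x0 + xs) \<le> \<kappa>3 * (norm g0)\<^sup>2"
  proof -
    have "g0 \<bullet> b0 (x0 + xs) \<le> norm g0 * norm (b0 (x0 + xs))" by (rule norm_cauchy_schwarz)
    also have "\<dots> \<le> norm g0 * (\<kappa>3 * norm g0)" unfolding g0_def using k3(2) by (intro mult_left_mono) auto
    finally show ?thesis by (simp add: power2_eq_square algebra_simps)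
  qed
  have "g0 \<bullet> \<Delta>1 \<le> \<epsilon> * cK3 Tp * P + P * (\<kappa>3 * (norm g0)\<^sup>2) - P * (\<gamma> * (norm g0)\<^sup>2)"
  proof -
    have "g0 \<bullet> \<Delta>1 = z (t0 + P) + P * (g0 \<bullet> b0 (x0 + xs)) - P * S2" using zP by simp
    moreover have "z (t0 + P) \<le> \<epsilon> * cK3 Tp * P" using zb z0 by simp
    moreover have "P * (g0 \<bullet> b0 (x0 + xs)) \<le> P * (\<kappa>3 * (norm g0)\<^sup>2)" using gb P by (intro mult_left_mono) auto
    moreover have "P * S2 \<ge> P * (\<gamma> * (norm g0)\<^sup>2)" using S2 P by (intro mult_left_mono) auto
    ultimately show ?thesis by linarith
  qed
  moreover have "J (X (t0 + P) + xs) - J0 \<le> g0 \<bullet> \<Delta>1 + LJ * (cA2 Tp * P)\<^sup>2"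
  proof -
    have "\<bar>J (X (t0 + P) + xs) - J0 - g0 \<bullet> \<Delta>1\<bar> \<le> LJ * (norm \<Delta>1)^2"
      unfolding J0_def g0_def \<Delta>1_def using J_taylor[of "X (t0 + P) + xs" "x0 + xs"] by simp
    also have "\<dots> \<le> LJ * (cA2 Tp * P)\<^sup>2" using d1 LJ by (intro mult_left_mono power_mono) auto
    finally show ?thesis by linarith
  qed
  moreover have "LJ * (cA2 Tp * P)\<^sup>2 \<le> P * (LJ * (cA2 Tp)\<^sup>2 * Tp * \<epsilon>)"
  proof -
    have "LJ * (cA2 Tp * P)\<^sup>2 = P * (LJ * (cA2 Tp)\<^sup>2 * Tp * \<epsilon>\<^sup>2)" unfolding P_def by (simp add: power2_eq_square)
    also have "\<dots> \<le> P * (LJ * (cA2 Tp)\<^sup>2 * Tp * \<epsilon>)"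
    proof (rule mult_left_mono)
      have "\<epsilon>\<^sup>2 \<le> \<epsilon>" using \<epsilon> by (simp add: power2_eq_square mult_left_le)
      then show "LJ * (cA2 Tp)\<^sup>2 * Tp * \<epsilon>\<^sup>2 \<le> LJ * (cA2 Tp)\<^sup>2 * Tp * \<epsilon>"
        by (rule mult_left_mono) (use LJ Tp in simp)
    qed (use P in simp)
    finally show ?thesis .
  qed
  moreover have "\<epsilon> * cK3 Tp * P + P * (\<kappa>3 * (norm g0)\<^sup>2) - P * (\<gamma> * (norm g0)\<^sup>2) + P * (LJ * (cA2 Tp)\<^sup>2 * Tp * \<epsilon>)
      = - P * (\<gamma> - \<kappa>3) * (norm g0)\<^sup>2 + P * (cK Tp * \<epsilon>)"
    unfolding cK_def by (simp add: algebra_simps)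
  ultimately have "J (X (t0 + P) + xs) - J0 \<le> - P * (\<gamma> - \<kappa>3) * (norm g0)\<^sup>2 + P * (cK Tp * \<epsilon>)"
    by linarith
  then show ?thesis unfolding P_def J0_def g0_def x0_def .
qed

end


lemma K_mono: "class_K f \<Longrightarrow> 0 \<le> x \<Longrightarrow> x \<le> x' \<Longrightarrow> f x \<le> f x'"
  unfolding class_K_def
  by (metis atLeast_iff order.trans order_le_less strict_mono_onD)

lemma K_strict: "class_K f \<Longrightarrow> 0 \<le> x \<Longrightarrow> x < x' \<Longrightarrow> f x < f x'"
  unfolding class_K_def by (auto intro: strict_mono_onD)

lemma K_nonneg: "class_K f \<Longrightarrow> 0 \<le> x \<Longrightarrow> 0 \<le> f x"
  using K_mono[of f 0 x] unfolding class_K_def by auto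

lemma K_less_iff: "class_K f \<Longrightarrow> 0 \<le> x \<Longrightarrow> 0 \<le> x' \<Longrightarrow> f x < f x' \<longleftrightarrow> x < x'"
  using K_strict[of f x x'] K_mono[of f x' x] by (metis linorder_not_le)

lemma K_inj: "class_K f \<Longrightarrow> inj_on f {0..}"
  unfolding class_K_def using strict_mono_on_imp_inj_on by blast

lemma K_inv_f: "class_K f \<Longrightarrow> x \<ge> 0 \<Longrightarrow> the_inv_into {0..} f (f x) = x"
  by (rule the_inv_into_f_f[OF K_inj]) auto

lemma K_f_inv: "class_K f \<Longrightarrow> y \<in> f ` {0..} \<Longrightarrow> f (the_inv_into {0..} f y) = y"
  by (rule f_the_inv_into_f[OF K_inj])

lemma K_inv_nonneg: "class_K f \<Longrightarrow> y \<in> f ` {0..} \<Longrightarrow> the_inv_into {0..} f y \<ge> 0"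
  using the_inv_into_into[OF K_inj, of f y "{0..}"] by auto

lemma K_image: "class_K f \<Longrightarrow> x \<ge> 0 \<Longrightarrow> 0 \<le> y \<Longrightarrow> y \<le> f x \<Longrightarrow> y \<in> f ` {0..}"
proof -
  assume K: "class_K f" and x: "x \<ge> 0" and y: "0 \<le> y" "y \<le> f x"
  have "continuous_on {0..x} f" using K unfolding class_K_def by (rule continuous_on_subset[OF conjunct1]) auto
  moreover have "f 0 \<le> y" using K y unfolding class_K_def by simp
  ultimately obtain z where "0 \<le> z" "z \<le> x" "f z = y" using IVT'[of f 0 y x] y x by auto
  then show ?thesis by auto
qed

lemma K_inv_cont: "class_K f \<Longrightarrow> continuous_on (f ` {0..}) (the_inv_into {0..} f)"
proof -
  assume K: "class_K f"
  let ?g = "the_inv_into {0..} f"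
  show ?thesis
  proof (clarsimp simp: continuous_on_eq_continuous_within)
    fix x0 :: real assume x0: "x0 \<ge> 0"
    define N where "N = x0 + 1"
    have c: "continuous_on (f ` {0..N}) ?g"
      by (rule continuous_on_inv) (use K in \<open>auto simp: class_K_def N_def K_inv_f intro: continuous_on_subset\<close>)
    then have "continuous (at (f x0) within f ` {0..N}) ?g"
      using x0 unfolding N_def by (auto simp: continuous_on_eq_continuous_within)
    moreover have "at (f x0) within f ` {0..} = at (f x0) within f ` {0..N}"
    proof (rule at_within_nhd[of _ "{..<f N}"])
      show "f x0 \<in> {..<f N}" using K_strict[OF K x0, of N] by (simp add: N_def)
      show "f ` {0..} \<inter> {..<f N} - {f x0} = f ` {0..N} \<inter> {..<f N} - {f x0}"
        using K_less_iff[OF K] x0 unfolding N_def by (force)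
    qed simp
    ultimately show "continuous (at (f x0) within f ` {0..}) ?g" by simp
  qed
qed

lemma K_inv_strict: "class_K f \<Longrightarrow> y1 \<in> f ` {0..} \<Longrightarrow> y2 \<in> f ` {0..} \<Longrightarrow> y1 < y2 \<Longrightarrow>
   the_inv_into {0..} f y1 < the_inv_into {0..} f y2"
  by (auto simp: K_inv_f K_less_iff)

lemma K_inv_mono: "class_K f \<Longrightarrow> y1 \<in> f ` {0..} \<Longrightarrow> y2 \<in> f ` {0..} \<Longrightarrow> y1 \<le> y2 \<Longrightarrow>
   the_inv_into {0..} f y1 \<le> the_inv_into {0..} f y2"
  using K_inv_strict[of f y1 y2] by (cases "y1 = y2") auto

lemma K_inv_zero: "class_K f \<Longrightarrow> the_inv_into {0..} f 0 = 0"
  using K_inv_f[of f 0] unfolding class_K_def by auto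


context ES begin

definition Vf :: "'a \<Rightarrow> real" where "Vf x = J (x + xs) - J xs"

lemma J_cont: "continuous_on S J"
proof -
  have "isCont J x" for x using J_deriv has_derivative_continuous by blast
  then show ?thesis by (intro continuous_at_imp_continuous_on) auto
qed

lemma Vf_cont: "continuous_on S Vf"
  unfolding Vf_def by (intro continuous_intros continuous_on_compose2[OF J_cont[of UNIV]]) auto

lemma Vf_nonneg: "Vf x \<ge> 0"
  unfolding Vf_def using reg_a[rule_format, of "x + xs"] by (cases "x = 0") auto

lemma Vf_pos: "x \<noteq> 0 \<Longrightarrow> Vf x > 0"
  unfolding Vf_def using reg_a[rule_format, of "x + xs"] by auto

lemma Vf_zero: "Vf 0 = 0" unfolding Vf_def by simp

lemma Vf_lip: "\<bar>Vf y - Vf x\<bar> \<le> M * norm (y - x)"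
  unfolding Vf_def using J_lip[of "y + xs" "x + xs"] by simp

lemma Vf_le: "Vf x \<le> M * norm x"
  using Vf_lip[of x 0] Vf_zero by simp

lemma unit_exists: "\<exists>e::'a. norm e = 1"
proof -
  obtain e :: 'a where "e \<in> Basis" using nonempty_Basis by (metis all_not_in_conv)
  then show ?thesis using norm_Basis by blast
qed

lemma radial_V: "\<exists>R. \<forall>x. norm x \<ge> R \<longrightarrow> Vf x \<ge> B"
proof -
  have "eventually (\<lambda>x. B + J xs \<le> J x) at_infinity" using radial unfolding filterlim_at_top by blast
  then obtain R where R: "\<And>x. R \<le> norm x \<Longrightarrow> B + J xs \<le> J x" unfolding eventually_at_infinity by blast
  have "Vf x \<ge> B" if "norm x \<ge> R + norm xs" for x
  proof -
    have "norm x \<le> norm (x + xs) + norm xs" using norm_triangle_ineq4[of "x + xs" xs] by simp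
    then have "norm (x + xs) \<ge> norm x - norm xs" by simp
    then have "R \<le> norm (x + xs)" using that by simp
    then show ?thesis using R unfolding Vf_def by fastforce
  qed
  then show ?thesis by blast
qed

definition mV :: "real \<Rightarrow> real" where "mV \<rho> = Inf (Vf ` {x. norm x \<ge> \<rho>})"

lemma mV_ne: "\<rho> \<ge> 0 \<Longrightarrow> Vf ` {x. norm x \<ge> \<rho>} \<noteq> {}"
proof -
  assume r: "\<rho> \<ge> 0"
  obtain e :: 'a where e: "norm e = 1" using unit_exists by blast
  have "norm (\<rho> *\<^sub>R e) \<ge> \<rho>" using e r by simp
  then show ?thesis by blast
qed

lemma mV_bdd: "bdd_below (Vf ` S)"
  using Vf_nonneg by (intro bdd_belowI[of _ 0]) auto

lemma mV_le: "norm x \<ge> \<rho> \<Longrightarrow> mV \<rho> \<le> Vf x"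
  unfolding mV_def by (rule cInf_lower[OF _ mV_bdd]) auto

lemma mV_ge: "\<rho> \<ge> 0 \<Longrightarrow> (\<And>x. norm x \<ge> \<rho> \<Longrightarrow> c \<le> Vf x) \<Longrightarrow> c \<le> mV \<rho>"
  unfolding mV_def by (rule cInf_greatest[OF mV_ne]) auto

lemma mV_nonneg: "\<rho> \<ge> 0 \<Longrightarrow> mV \<rho> \<ge> 0"
  by (rule mV_ge) (auto intro: Vf_nonneg)

lemma mV_zero: "mV 0 = 0"
  using mV_le[of 0 0] mV_nonneg[of 0] Vf_zero by simp

lemma mV_mono: "0 \<le> r1 \<Longrightarrow> r1 \<le> r2 \<Longrightarrow> mV r1 \<le> mV r2"
  by (rule mV_ge) (auto intro: mV_le)

lemma mV_lip: "0 \<le> r1 \<Longrightarrow> r1 \<le> r2 \<Longrightarrow> mV r2 \<le> mV r1 + M * (r2 - r1)"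
proof -
  assume r: "0 \<le> r1" "r1 \<le> r2"
  obtain e :: 'a where e: "norm e = 1" using unit_exists by blast
  have "mV r2 - M * (r2 - r1) \<le> mV r1"
  proof (rule mV_ge[OF r(1)])
    fix x :: 'a assume x: "norm x \<ge> r1"
    define c where "c = r2 - r1"
    have c: "c \<ge> 0" using r by (simp add: c_def)
    obtain x' where x': "norm x' \<ge> r2" "norm (x' - x) \<le> c"
    proof (cases "x = 0")
      case True
      then have "r1 = 0" using x r by simp
      then show ?thesis using that[of "r2 *\<^sub>R e"] True e r c_def by simp
    next
      case False
      then have nx: "norm x > 0" by simp
      define x' where "x' = (1 + c / norm x) *\<^sub>R x"
      have "norm x' = (1 + c / norm x) * norm x" unfolding x'_def using c nx by (simp add: abs_of_nonneg)
      also have "\<dots> = norm x + c" using nx by (simp add: field_simps)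
      finally have n1: "norm x' = norm x + c" .
      have "x' - x = (c / norm x) *\<^sub>R x" unfolding x'_def by (simp add: algebra_simps)
      then have "norm (x' - x) = c" using nx c by simp
      then show ?thesis using that[of x'] n1 x unfolding c_def by simp
    qed
    have "mV r2 \<le> Vf x'" by (rule mV_le[OF x'(1)])
    also have "\<dots> \<le> Vf x + M * norm (x' - x)" using Vf_lip[of x' x] by simp
    also have "\<dots> \<le> Vf x + M * c" using x'(2) M by (simp add: mult_left_mono)
    finally show "mV r2 - M * (r2 - r1) \<le> Vf x" unfolding c_def by simp
  qed
  then show ?thesis by simp
qed

lemma mV_cont: "continuous_on {0..} mV"
proof (rule lipschitz_on_continuous_on[of M], rule lipschitz_onI)
  fix x y :: real assume "x \<in> {0..}" "y \<in> {0..}"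
  then show "dist (mV x) (mV y) \<le> M * dist x y"
    using mV_lip[of x y] mV_lip[of y x] mV_mono[of x y] mV_mono[of y x]
    by (cases "x \<le> y") (auto simp: dist_real_def abs_if algebra_simps)
qed (use M in simp)

lemma mV_pos: "\<rho> > 0 \<Longrightarrow> mV \<rho> > 0"
proof -
  assume r: "\<rho> > 0"
  obtain R where R: "\<And>x. norm x \<ge> R \<Longrightarrow> Vf x \<ge> 1" using radial_V[of 1] by blast
  define R' where "R' = max \<rho> R"
  define K where "K = {x::'a. \<rho> \<le> norm x \<and> norm x \<le> R'}"
  have Kc: "compact K"
  proof -
    have "K = cball 0 R' - ball 0 \<rho>" unfolding K_def by (auto simp: dist_norm)
    then show ?thesis by (simp add: compact_diff)
  qed
  obtain e :: 'a where e: "norm e = 1" using unit_exists by blast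
  have Kne: "K \<noteq> {}" using e r unfolding K_def R'_def by (intro ex_in_conv[THEN iffD1] exI[of _ "\<rho> *\<^sub>R e"]) auto
  obtain xm where xm: "xm \<in> K" "\<And>y. y \<in> K \<Longrightarrow> Vf xm \<le> Vf y"
    using continuous_attains_inf[OF Kc Kne Vf_cont] by blast
  have "xm \<noteq> 0" using xm(1) r unfolding K_def by auto
  then have pos: "Vf xm > 0" by (rule Vf_pos)
  have "min 1 (Vf xm) \<le> mV \<rho>"
  proof (rule mV_ge)
    fix x :: 'a assume x: "norm x \<ge> \<rho>"
    show "min 1 (Vf xm) \<le> Vf x"
    proof (cases "norm x \<le> R'")
      case True then have "x \<in> K" using x unfolding K_def by simp
      then show ?thesis using xm(2) by fastforce
    next
      case False then have "norm x \<ge> R" unfolding R'_def by simp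
      then show ?thesis using R by fastforce
    qed
  qed (use r in simp)
  then show ?thesis using pos by simp
qed

lemma mV_unbounded: "\<exists>\<rho>\<ge>0. mV \<rho> \<ge> B"
proof -
  obtain R where R: "\<And>x. norm x \<ge> R \<Longrightarrow> Vf x \<ge> B" using radial_V[of B] by blast
  have "B \<le> mV (max R 0)" by (rule mV_ge) (use R in auto)
  then show ?thesis by (intro exI[of _ "max R 0"]) auto
qed

definition aV :: "real \<Rightarrow> real" where "aV \<rho> = mV \<rho> * (\<rho> / (1 + \<rho>))"

lemma aV_K: "class_K aV"
  unfolding class_K_def
proof (intro conjI)
  show "continuous_on {0..} aV" unfolding aV_def
    by (intro continuous_intros mV_cont) auto
  show "aV 0 = 0" unfolding aV_def by simp
  show "strict_mono_on {0..} aV"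
  proof (rule strict_mono_onI)
    fix r s :: real assume r: "r \<in> {0..}" and s: "s \<in> {0..}" and rs: "r < s"
    have q: "r / (1 + r) < s / (1 + s)" using r s rs by (simp add: field_simps)
    have ms: "mV s > 0" using mV_pos[of s] r s rs by simp
    have "mV r * (r / (1 + r)) \<le> mV s * (r / (1 + r))" using mV_mono[of r s] r rs by (intro mult_right_mono) auto
    also have "\<dots> < mV s * (s / (1 + s))" by (rule mult_strict_left_mono[OF q ms])
    finally show "aV r < aV s" unfolding aV_def .
  qed
qed

lemma aV_le: "\<rho> \<ge> 0 \<Longrightarrow> aV \<rho> \<le> mV \<rho>"
  unfolding aV_def using mV_nonneg[of \<rho>] by (intro mult_left_le) auto

lemma aV_image: "y \<ge> 0 \<Longrightarrow> y \<in> aV ` {0..}"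
proof -
  assume y: "y \<ge> 0"
  obtain \<rho> where r: "\<rho> \<ge> 0" "mV \<rho> \<ge> 2 * y" using mV_unbounded[of "2 * y"] by blast
  define s where "s = max \<rho> 1"
  have "mV s \<ge> 2 * y" using mV_mono[of \<rho> s] r unfolding s_def by simp
  moreover have "s / (1 + s) \<ge> 1 / 2" unfolding s_def by (simp add: field_simps)
  ultimately have "mV s * (s / (1 + s)) \<ge> (2 * y) * (1 / 2)" using y
    by (intro mult_mono) (auto simp: s_def)
  then have "aV s \<ge> y" unfolding aV_def by simp
  then show ?thesis using K_image[OF aV_K, of s y] y unfolding s_def by simp
qed

lemma aV_image_eq: "aV ` {0..} = {0..}"
  using aV_image K_nonneg[OF aV_K] by auto

definition Gm :: "real \<Rightarrow> real" where "Gm = the_inv_into {0..} aV"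

lemma Gm_K: "class_K Gm"
  unfolding class_K_def
proof (intro conjI)
  show "continuous_on {0..} Gm" using K_inv_cont[OF aV_K] unfolding Gm_def aV_image_eq .
  show "Gm 0 = 0" unfolding Gm_def by (rule K_inv_zero[OF aV_K])
  show "strict_mono_on {0..} Gm"
    by (rule strict_mono_onI) (use K_inv_strict[OF aV_K] in \<open>auto simp: Gm_def aV_image_eq\<close>)
qed

lemma Gm_bound: "norm x \<le> Gm (Vf x)"
proof (rule ccontr)
  assume c: "\<not> norm x \<le> Gm (Vf x)"
  have Vin: "Vf x \<in> aV ` {0..}" using aV_image Vf_nonneg by blast
  have g0: "Gm (Vf x) \<ge> 0" unfolding Gm_def by (rule K_inv_nonneg[OF aV_K Vin])
  have "aV (Gm (Vf x)) = Vf x" unfolding Gm_def by (rule K_f_inv[OF aV_K Vin])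
  moreover have "aV (Gm (Vf x)) < aV (norm x)" using K_strict[OF aV_K g0] c by simp
  moreover have "aV (norm x) \<le> Vf x" using aV_le[of "norm x"] mV_le[of "norm x" x] by simp
  ultimately show False by simp
qed

end


definition yfg :: "(real \<Rightarrow> real) \<Rightarrow> real \<Rightarrow> real \<Rightarrow> real" where
  "yfg \<rho> v t = 4 * v * \<rho> v / max (4 * v) (t * \<rho> v)"

lemma yfg_bounds:
  assumes K: "class_K \<rho>" and v: "v \<ge> 0" and t: "t \<ge> 0"
  shows "0 \<le> yfg \<rho> v t" "yfg \<rho> v t \<le> \<rho> v"
proof -
  have r: "\<rho> v \<ge> 0" by (rule K_nonneg[OF K v])
  show "0 \<le> yfg \<rho> v t" unfolding yfg_def using v r t by (auto intro!: divide_nonneg_nonneg)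
  show "yfg \<rho> v t \<le> \<rho> v"
  proof (cases "v = 0")
    case True then show ?thesis using r unfolding yfg_def by simp
  next
    case False
    then have "max (4 * v) (t * \<rho> v) > 0" using v by (simp add: less_max_iff_disj)
    moreover have "4 * v * \<rho> v \<le> \<rho> v * max (4 * v) (t * \<rho> v)" using r by (simp add: mult_left_mono mult.commute)
    ultimately show ?thesis unfolding yfg_def by (simp add: divide_le_eq)
  qed
qed

lemma yfg_case1: "class_K \<rho> \<Longrightarrow> t * \<rho> v \<le> 4 * v \<Longrightarrow> v \<ge> 0 \<Longrightarrow> yfg \<rho> v t = \<rho> v"
  unfolding yfg_def class_K_def by (cases "v = 0") (auto simp: max_def)

lemma yfg_case2: "t * \<rho> v > 4 * v \<Longrightarrow> v \<ge> 0 \<Longrightarrow> yfg \<rho> v t = 4 * v / t"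
proof -
  assume a: "t * \<rho> v > 4 * v" and v: "v \<ge> 0"
  then have "max (4 * v) (t * \<rho> v) = t * \<rho> v" by simp
  moreover have "\<rho> v \<noteq> 0" using a v by auto
  ultimately show ?thesis unfolding yfg_def by simp
qed

lemma discrete_cmp:
  fixes v :: "real \<Rightarrow> real" and \<rho> :: "real \<Rightarrow> real"
  assumes P: "P > 0" and K: "class_K \<rho>" and \<rho>s: "\<And>x. x \<ge> 0 \<Longrightarrow> \<rho> x \<le> \<rho>s"
    and vnn: "\<And>t. t \<ge> 0 \<Longrightarrow> v t \<ge> 0"
    and step: "\<And>t. t \<ge> 0 \<Longrightarrow> v (t + P) \<le> v t - P * \<rho> (v t) + P * e1"
    and within: "\<And>t0 t. t0 \<ge> 0 \<Longrightarrow> t0 \<le> t \<Longrightarrow> t \<le> t0 + P \<Longrightarrow> v t \<le> v t0 + e2"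
    and \<delta>: "\<delta> > 0" "2 * e1 \<le> \<rho> \<delta>" and e1: "e1 \<ge> 0"
    and v0: "v 0 \<le> v0"
    and t: "t \<ge> 0"
  shows "v t \<le> max \<delta> (the_inv_into {0..} \<rho> (yfg \<rho> v0 t)) + P * \<rho>s / 2 + P * e1 + e2"
proof -
  have v0nn: "v0 \<ge> 0" using vnn[of 0] v0 by simp
  have grid: "v (real k * P) \<le> max (lvl + P * e1) (v0 - real k * P * \<rho> lvl / 2)" if lvl: "lvl \<ge> \<delta>" for lvl k
  proof (induction k)
    case 0 then show ?case using v0 by simp
  next
    case (Suc k)
    define vk where "vk = v (real k * P)"
    have vknn: "vk \<ge> 0" unfolding vk_def using vnn P by simp
    have st: "v (real (Suc k) * P) \<le> vk - P * \<rho> vk + P * e1"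
      using step[of "real k * P"] P unfolding vk_def by (simp add: algebra_simps)
    have rl: "\<rho> lvl \<ge> 0" using K_nonneg[OF K] lvl \<delta> by simp
    show ?case
    proof (cases "vk \<le> lvl")
      case True
      then have "v (real (Suc k) * P) \<le> lvl + P * e1" using st K_nonneg[OF K vknn] P
        by (smt (verit) mult_nonneg_nonneg)
      then show ?thesis by simp
    next
      case False
      have r1: "\<rho> vk \<ge> \<rho> lvl" using K_mono[OF K, of lvl vk] False lvl \<delta> by simp
      have r2: "\<rho> lvl \<ge> \<rho> \<delta>" using K_mono[OF K, of \<delta> lvl] lvl \<delta> by simp
      have "v (real (Suc k) * P) \<le> vk - P * \<rho> lvl / 2"
      proof -
        have "P * e1 \<le> P * (\<rho> vk / 2)" using \<delta>(2) r1 r2 P by (intro mult_left_mono) auto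
        moreover have "P * \<rho> lvl \<le> P * \<rho> vk" using r1 P by (intro mult_left_mono) auto
        ultimately show ?thesis using st by simp
      qed
      note nx = this
      have disj: "vk \<le> lvl + P * e1 \<or> vk \<le> v0 - real k * P * \<rho> lvl / 2" using Suc unfolding vk_def by linarith
      have Pr: "P * \<rho> lvl \<ge> 0" using P rl by simp
      have "v (real (Suc k) * P) \<le> lvl + P * e1 \<or> v (real (Suc k) * P) \<le> v0 - real (Suc k) * P * \<rho> lvl / 2"
      proof (cases "vk \<le> lvl + P * e1")
        case True then show ?thesis using nx Pr by linarith
      next
        case False
        then have "vk \<le> v0 - real k * P * \<rho> lvl / 2" using disj by linarith
        then have "v (real (Suc k) * P) \<le> v0 - real k * P * \<rho> lvl / 2 - P * \<rho> lvl / 2" using nx by linarith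
        moreover have "real k * P * \<rho> lvl / 2 + P * \<rho> lvl / 2 = real (Suc k) * P * \<rho> lvl / 2"
          by (simp add: algebra_simps)
        ultimately show ?thesis by linarith
      qed
      then show ?thesis by linarith
    qed
  qed
  define k where "k = nat \<lfloor>t / P\<rfloor>"
  have kP: "real k * P \<le> t" "t \<le> real k * P + P"
  proof -
    have "real k = of_int \<lfloor>t / P\<rfloor>" unfolding k_def using t P by simp
    moreover have "of_int \<lfloor>t / P\<rfloor> \<le> t / P" "t / P < of_int \<lfloor>t / P\<rfloor> + 1" by linarith+
    ultimately have a: "real k \<le> t / P" "t / P \<le> real k + 1" by auto
    from a(1) show "real k * P \<le> t" using P by (simp add: le_divide_eq)
    from a(2) have "t \<le> (real k + 1) * P" using P by (simp add: divide_le_eq)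
    then show "t \<le> real k * P + P" by (simp add: algebra_simps)
  qed
  have gen: "v t \<le> max lvl (v0 - max 0 (t - P) * \<rho> lvl / 2) + P * e1 + e2" if lvl: "lvl \<ge> \<delta>" for lvl
  proof -
    have a1: "v t \<le> v (real k * P) + e2" using within[of "real k * P" t] kP P by simp
    have a2: "v (real k * P) \<le> lvl + P * e1 \<or> v (real k * P) \<le> v0 - real k * P * \<rho> lvl / 2"
      using grid[OF lvl, of k] by linarith
    have rl: "\<rho> lvl \<ge> 0" using K_nonneg[OF K] lvl \<delta> by simp
    have a3: "max 0 (t - P) * \<rho> lvl / 2 \<le> real k * P * \<rho> lvl / 2"
      using kP P rl by (intro divide_right_mono mult_right_mono) auto
    have a4: "P * e1 \<ge> 0" using e1 P by simp
    have m1: "lvl \<le> max lvl (v0 - max 0 (t - P) * \<rho> lvl / 2)" by simp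
    have m2: "v0 - max 0 (t - P) * \<rho> lvl / 2 \<le> max lvl (v0 - max 0 (t - P) * \<rho> lvl / 2)" by simp
    from a2 show ?thesis
    proof
      assume "v (real k * P) \<le> lvl + P * e1" then show ?thesis using a1 m1 by linarith
    next
      assume "v (real k * P) \<le> v0 - real k * P * \<rho> lvl / 2" then show ?thesis using a1 a3 a4 m2 by linarith
    qed
  qed
  define y where "y = yfg \<rho> v0 t"
  define w where "w = the_inv_into {0..} \<rho> y"
  have y: "0 \<le> y" "y \<le> \<rho> v0" using yfg_bounds[OF K v0nn t] unfolding y_def by auto
  have yin: "y \<in> \<rho> ` {0..}" by (rule K_image[OF K v0nn y])
  have w: "w \<ge> 0" "\<rho> w = y" unfolding w_def using K_inv_nonneg[OF K yin] K_f_inv[OF K yin] by auto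
  define lvl where "lvl = max \<delta> w"
  have lvl: "lvl \<ge> \<delta>" "lvl \<ge> w" unfolding lvl_def by auto
  have rlw: "\<rho> lvl \<ge> y" using K_mono[OF K w(1) lvl(2)] w by simp
  have "max lvl (v0 - max 0 (t - P) * \<rho> lvl / 2) \<le> lvl + P * \<rho>s / 2"
  proof (cases "t * \<rho> v0 \<le> 4 * v0")
    case True
    then have "y = \<rho> v0" unfolding y_def by (rule yfg_case1[OF K _ v0nn])
    then have "w = v0" unfolding w_def using K_inv_f[OF K v0nn] by simp
    moreover have "max 0 (t - P) * \<rho> lvl / 2 \<ge> 0" using K_nonneg[OF K, of lvl] lvl \<delta> by simp
    moreover have "P * \<rho>s / 2 \<ge> 0" using \<rho>s[of 0] K_nonneg[OF K, of 0] P by simp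
    ultimately show ?thesis using lvl by simp
  next
    case False
    then have yv: "y = 4 * v0 / t" unfolding y_def by (intro yfg_case2) (use v0nn in simp)+
    have tpos: "t > 0" using False v0nn t by (cases "t = 0") auto
    show ?thesis
    proof (cases "t \<ge> 2 * P")
      case True
      then have "max 0 (t - P) \<ge> t / 2" by (simp add: le_max_iff_disj)
      moreover have "\<rho> lvl \<ge> 4 * v0 / t" using rlw yv by simp
      ultimately have "max 0 (t - P) * \<rho> lvl / 2 \<ge> (t / 2) * (4 * v0 / t) / 2"
        using tpos v0nn True by (intro divide_right_mono mult_mono) auto
      also have "(t / 2) * (4 * v0 / t) / 2 = v0" using tpos by simp
      finally have "v0 - max 0 (t - P) * \<rho> lvl / 2 \<le> 0" by simp
      moreover have "lvl \<ge> 0" using lvl \<delta> by simp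
      moreover have "P * \<rho>s / 2 \<ge> 0" using \<rho>s[of 0] K_nonneg[OF K, of 0] P by simp
      ultimately show ?thesis by simp
    next
      case False
      have "4 * v0 < t * \<rho> v0" using \<open>\<not> t * \<rho> v0 \<le> 4 * v0\<close> by simp
      also have "\<dots> \<le> (2 * P) * \<rho>s" using False tpos \<rho>s[OF v0nn] K_nonneg[OF K v0nn]
        by (intro mult_mono) auto
      finally have "v0 \<le> P * \<rho>s / 2" by simp
      moreover have "max 0 (t - P) * \<rho> lvl / 2 \<ge> 0" using K_nonneg[OF K, of lvl] lvl \<delta> by simp
      moreover have "lvl \<ge> 0" using lvl \<delta> by simp
      ultimately show ?thesis using v0nn by simp
    qed
  qed
  with gen[OF lvl(1)] have "v t \<le> lvl + P * \<rho>s / 2 + P * e1 + e2" by linarith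
  then show ?thesis unfolding lvl_def w_def y_def .
qed


lemma yfg_min: "class_K \<rho> \<Longrightarrow> v \<ge> 0 \<Longrightarrow> t > 0 \<Longrightarrow> yfg \<rho> v t = min (\<rho> v) (4 * v / t)"
proof -
  assume K: "class_K \<rho>" and v: "v \<ge> 0" and t: "t > 0"
  show ?thesis
  proof (cases "t * \<rho> v \<le> 4 * v")
    case True
    then have "\<rho> v \<le> 4 * v / t" using t by (simp add: le_divide_eq mult.commute)
    then show ?thesis using yfg_case1[OF K True v] by simp
  next
    case False
    then have "4 * v / t < \<rho> v" using t by (simp add: divide_less_eq mult.commute)
    then show ?thesis using yfg_case2 False v by (simp add: not_le)
  qed
qed

lemma yfg_zero_t: "class_K \<rho> \<Longrightarrow> v \<ge> 0 \<Longrightarrow> yfg \<rho> v 0 = \<rho> v"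
  by (rule yfg_case1) auto

lemma yfg_zero_v: "yfg \<rho> 0 t = 0"
  unfolding yfg_def by simp

lemma yfg_strict: "class_K \<rho> \<Longrightarrow> t \<ge> 0 \<Longrightarrow> 0 \<le> v \<Longrightarrow> v < v' \<Longrightarrow> yfg \<rho> v t < yfg \<rho> v' t"
proof -
  assume K: "class_K \<rho>" and t: "t \<ge> 0" and v: "0 \<le> v" "v < v'"
  have r: "\<rho> v < \<rho> v'" by (rule K_strict[OF K v])
  show ?thesis
  proof (cases "t = 0")
    case True then show ?thesis using yfg_zero_t[OF K] v r by simp
  next
    case False
    then have tp: "t > 0" using t by simp
    have "4 * v / t < 4 * v' / t" using v tp by (simp add: divide_strict_right_mono)
    then show ?thesis using yfg_min[OF K _ tp] v r by (simp add: min_def)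
  qed
qed

lemma yfg_anti: "class_K \<rho> \<Longrightarrow> v \<ge> 0 \<Longrightarrow> 0 \<le> t \<Longrightarrow> t \<le> t' \<Longrightarrow> yfg \<rho> v t' \<le> yfg \<rho> v t"
proof -
  assume K: "class_K \<rho>" and v: "v \<ge> 0" and t: "0 \<le> t" "t \<le> t'"
  show ?thesis
  proof (cases "t = 0")
    case True then show ?thesis using yfg_zero_t[OF K v] yfg_bounds(2)[OF K v, of t'] t by simp
  next
    case False
    then have tp: "t > 0" using t by simp
    have "4 * v / t' \<le> 4 * v / t" using v tp t by (intro divide_left_mono) auto
    then show ?thesis using yfg_min[OF K v tp] yfg_min[OF K v, of t'] tp t by (simp add: min_def)
  qed
qed

lemma yfg_lim: "class_K \<rho> \<Longrightarrow> v \<ge> 0 \<Longrightarrow> ((\<lambda>t. yfg \<rho> v t) \<longlongrightarrow> 0) at_top"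
proof -
  assume K: "class_K \<rho>" and v: "v \<ge> 0"
  have l: "((\<lambda>t::real. (4 * v) / t) \<longlongrightarrow> 0) at_top"
    by (rule tendsto_divide_0[OF tendsto_const]) (rule filterlim_at_top_imp_at_infinity[OF filterlim_ident])
  show ?thesis
  proof (rule tendsto_sandwich[OF _ _ tendsto_const l])
    show "eventually (\<lambda>t. 0 \<le> yfg \<rho> v t) at_top"
      using yfg_bounds(1)[OF K v] by (auto simp: eventually_at_top_linorder intro!: exI[of _ 0])
    show "eventually (\<lambda>t. yfg \<rho> v t \<le> 4 * v / t) at_top"
      using yfg_min[OF K v] by (auto simp: eventually_at_top_linorder intro!: exI[of _ 1])
  qed
qed

lemma yfg_cont: "class_K \<rho> \<Longrightarrow> continuous_on ({0..} \<times> {0..}) (\<lambda>p. yfg \<rho> (fst p) (snd p))"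
proof -
  assume K: "class_K \<rho>"
  let ?S = "{0::real..} \<times> {0::real..}"
  have rc: "continuous_on ?S (\<lambda>p. \<rho> (fst p))"
    by (rule continuous_on_compose2[of "{0..}" \<rho>]) (use K in \<open>auto simp: class_K_def intro: continuous_intros\<close>)
  show ?thesis
  proof (clarsimp simp: continuous_on_eq_continuous_within)
    fix v0 t0 :: real assume v0: "v0 \<ge> 0" and t0: "t0 \<ge> 0"
    have rl: "((\<lambda>p. \<rho> (fst p)) \<longlongrightarrow> \<rho> v0) (at (v0, t0) within ?S)"
      using rc v0 t0 unfolding continuous_on_def by auto
    show "continuous (at (v0, t0) within ?S) (\<lambda>p. yfg \<rho> (fst p) (snd p))"
      unfolding continuous_within
    proof (cases "v0 = 0")
      case True
      have "\<rho> v0 = 0" using K True by (simp add: class_K_def)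
      show "((\<lambda>p. yfg \<rho> (fst p) (snd p)) \<longlongrightarrow> yfg \<rho> (fst (v0, t0)) (snd (v0, t0))) (at (v0, t0) within ?S)"
      proof -
        have "((\<lambda>p. yfg \<rho> (fst p) (snd p)) \<longlongrightarrow> 0) (at (v0, t0) within ?S)"
        proof (rule tendsto_sandwich[OF _ _ tendsto_const])
          show "eventually (\<lambda>p. 0 \<le> yfg \<rho> (fst p) (snd p)) (at (v0, t0) within ?S)"
            unfolding eventually_at_filter by (rule always_eventually) (auto intro: yfg_bounds(1)[OF K])
          show "eventually (\<lambda>p. yfg \<rho> (fst p) (snd p) \<le> \<rho> (fst p)) (at (v0, t0) within ?S)"
            unfolding eventually_at_filter by (rule always_eventually) (auto intro: yfg_bounds(2)[OF K])
          show "((\<lambda>p. \<rho> (fst p)) \<longlongrightarrow> 0) (at (v0, t0) within ?S)" using rl \<open>\<rho> v0 = 0\<close> by simp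
        qed
        then show ?thesis using True by (simp add: yfg_zero_v)
      qed
    next
      case False
      then have v0p: "v0 > 0" using v0 by simp
      have d: "max (4 * v0) (t0 * \<rho> v0) \<noteq> 0" using v0p by (auto simp: max_def)
      have "((\<lambda>p. 4 * fst p * \<rho> (fst p) / max (4 * fst p) (snd p * \<rho> (fst p))) \<longlongrightarrow>
          4 * v0 * \<rho> v0 / max (4 * v0) (t0 * \<rho> v0)) (at (v0, t0) within ?S)"
      proof -
        have f1: "(fst \<longlongrightarrow> v0) (at (v0, t0) within ?S)" using tendsto_fst[OF tendsto_ident_at[of "(v0, t0)" ?S]] by simp
        have f2: "(snd \<longlongrightarrow> t0) (at (v0, t0) within ?S)" using tendsto_snd[OF tendsto_ident_at[of "(v0, t0)" ?S]] by simp
        show ?thesis by (intro tendsto_intros rl d f1 f2)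
      qed
      then show "((\<lambda>p. yfg \<rho> (fst p) (snd p)) \<longlongrightarrow> yfg \<rho> (fst (v0, t0)) (snd (v0, t0))) (at (v0, t0) within ?S)"
        unfolding yfg_def by simp
    qed
  qed
qed


context ES begin

definition cg :: real where "cg = \<gamma> - \<kappa>3"

lemma cg_pos: "cg > 0" unfolding cg_def using gk by simp

definition \<rho>f :: "real \<Rightarrow> real" where "\<rho>f v = cg * (\<alpha> (v / M))\<^sup>2"

lemma \<rho>f_K: "class_K \<rho>f"
  unfolding class_K_def
proof (intro conjI)
  show "continuous_on {0..} \<rho>f" unfolding \<rho>f_def
    by (intro continuous_intros continuous_on_compose2[OF alpha_props(1)]) (use M in auto)
  show "\<rho>f 0 = 0" unfolding \<rho>f_def using alpha_props(2) by simp
  show "strict_mono_on {0..} \<rho>f"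
  proof (rule strict_mono_onI)
    fix r s :: real assume r: "r \<in> {0..}" and s: "s \<in> {0..}" and rs: "r < s"
    have "\<alpha> (r / M) < \<alpha> (s / M)"
      using strict_mono_onD[OF alpha_props(3)] r s rs M by (simp add: divide_strict_right_mono)
    moreover have "0 \<le> \<alpha> (r / M)" using alpha_nonneg r M by simp
    ultimately have "(\<alpha> (r / M))\<^sup>2 < (\<alpha> (s / M))\<^sup>2" by (rule power_strict_mono) simp
    then show "\<rho>f r < \<rho>f s" unfolding \<rho>f_def using cg_pos by simp
  qed
qed

lemma \<rho>f_bound: "v \<ge> 0 \<Longrightarrow> \<rho>f v \<le> cg * M\<^sup>2"
  unfolding \<rho>f_def using cg_pos alpha_le_M[of "v / M"] alpha_nonneg[of "v / M"] M
  by (intro mult_left_mono power_mono) auto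

lemma \<rho>f_rate: "\<rho>f (Vf x) \<le> cg * (norm (dJ (x + xs)))\<^sup>2"
proof -
  have "Vf x / M \<le> norm x" using Vf_le[of x] M by (simp add: divide_le_eq mult.commute)
  then have "\<alpha> (Vf x / M) \<le> \<alpha> (norm x)" using Vf_nonneg[of x] M by (intro alpha_mono) auto
  also have "\<dots> \<le> norm (dJ (x + xs))" by (rule alpha_grad)
  finally have "(\<alpha> (Vf x / M))\<^sup>2 \<le> (norm (dJ (x + xs)))\<^sup>2"
    using alpha_nonneg[of "Vf x / M"] Vf_nonneg[of x] M by (intro power_mono) auto
  then show ?thesis unfolding \<rho>f_def using cg_pos by simp
qed

definition \<rho>inv :: "real \<Rightarrow> real" where "\<rho>inv = the_inv_into {0..} \<rho>f"

definition \<beta>f :: "real \<Rightarrow> real \<Rightarrow> real" where "\<beta>f s t = Gm (2 * \<rho>inv (yfg \<rho>f (M * s) t))"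

lemma yin: "s \<ge> 0 \<Longrightarrow> t \<ge> 0 \<Longrightarrow> yfg \<rho>f (M * s) t \<in> \<rho>f ` {0..}"
  using K_image[OF \<rho>f_K, of "M * s"] yfg_bounds[OF \<rho>f_K, of "M * s" t] M by simp

lemma \<beta>f_cont: "continuous_on ({0..} \<times> {0..}) (\<lambda>p. \<beta>f (fst p) (snd p))"
proof -
  let ?S = "{0::real..} \<times> {0::real..}"
  have h1: "continuous_on ?S (\<lambda>p. yfg \<rho>f (M * fst p) (snd p))"
    by (rule continuous_on_compose2[OF yfg_cont[OF \<rho>f_K], of _ "\<lambda>p. (M * fst p, snd p)", simplified])
       (use M in \<open>auto intro!: continuous_intros\<close>)
  have h2: "continuous_on ?S (\<lambda>p. \<rho>inv (yfg \<rho>f (M * fst p) (snd p)))"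
    unfolding \<rho>inv_def by (rule continuous_on_compose2[OF K_inv_cont[OF \<rho>f_K] h1]) (auto intro: yin)
  have h3: "continuous_on ?S (\<lambda>p. Gm (2 * \<rho>inv (yfg \<rho>f (M * fst p) (snd p))))"
    by (rule continuous_on_compose2[of "{0..}" Gm]) (use Gm_K h2 in \<open>auto simp: class_K_def \<rho>inv_def
        intro!: continuous_intros K_inv_nonneg[OF \<rho>f_K] yin\<close>)
  then show ?thesis unfolding \<beta>f_def .
qed

lemma \<beta>f_KL: "class_KL \<beta>f"
  unfolding class_KL_def
proof (intro conjI allI impI ballI)
  show "continuous_on ({0..} \<times> {0..}) (\<lambda>(s, t). \<beta>f s t)"
    using \<beta>f_cont by (simp add: case_prod_beta')
  fix t :: real assume t: "t \<ge> 0"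
  show "class_K (\<lambda>s. \<beta>f s t)"
    unfolding class_K_def
  proof (intro conjI)
    show "continuous_on {0..} (\<lambda>s. \<beta>f s t)"
      by (rule continuous_on_compose2[OF \<beta>f_cont, of _ "\<lambda>s. (s, t)", simplified]) (use t in \<open>auto intro!: continuous_intros\<close>)
    show "\<beta>f 0 t = 0" unfolding \<beta>f_def \<rho>inv_def using yfg_zero_v K_inv_zero[OF \<rho>f_K] Gm_K
      by (simp add: class_K_def)
    show "strict_mono_on {0..} (\<lambda>s. \<beta>f s t)"
    proof (rule strict_mono_onI)
      fix s s' :: real assume s: "s \<in> {0..}" "s' \<in> {0..}" "s < s'"
      have "yfg \<rho>f (M * s) t < yfg \<rho>f (M * s') t" using yfg_strict[OF \<rho>f_K t] s M by simp
      then have "\<rho>inv (yfg \<rho>f (M * s) t) < \<rho>inv (yfg \<rho>f (M * s') t)"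
        unfolding \<rho>inv_def using K_inv_strict[OF \<rho>f_K] yin s t by simp
      moreover have "\<rho>inv (yfg \<rho>f (M * s) t) \<ge> 0" unfolding \<rho>inv_def using K_inv_nonneg[OF \<rho>f_K] yin s t by simp
      ultimately show "\<beta>f s t < \<beta>f s' t" unfolding \<beta>f_def using K_strict[OF Gm_K] by simp
    qed
  qed
next
  fix s :: real assume s: "s \<ge> 0"
  show "antimono_on {0..} (\<beta>f s)"
  proof (rule monotone_onI)
    fix t t' :: real assume t: "t \<in> {0..}" "t' \<in> {0..}" "t \<le> t'"
    have "yfg \<rho>f (M * s) t' \<le> yfg \<rho>f (M * s) t" using yfg_anti[OF \<rho>f_K] s t M by simp
    then have "\<rho>inv (yfg \<rho>f (M * s) t') \<le> \<rho>inv (yfg \<rho>f (M * s) t)"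
      unfolding \<rho>inv_def using K_inv_mono[OF \<rho>f_K] yin s t by simp
    moreover have "\<rho>inv (yfg \<rho>f (M * s) t') \<ge> 0" unfolding \<rho>inv_def using K_inv_nonneg[OF \<rho>f_K] yin s t by simp
    ultimately show "\<beta>f s t' \<le> \<beta>f s t" unfolding \<beta>f_def using K_mono[OF Gm_K] by simp
  qed
  show "(\<beta>f s \<longlongrightarrow> 0) at_top"
  proof -
    have l1: "((\<lambda>t. yfg \<rho>f (M * s) t) \<longlongrightarrow> 0) at_top" by (rule yfg_lim[OF \<rho>f_K]) (use s M in simp)
    have ev: "eventually (\<lambda>t. yfg \<rho>f (M * s) t \<in> \<rho>f ` {0..}) at_top"
      using yin s by (auto simp: eventually_at_top_linorder intro!: exI[of _ 0])
    have 0: "0 \<in> \<rho>f ` {0..}" using K_image[OF \<rho>f_K, of 0 0] K_nonneg[OF \<rho>f_K, of 0] by simp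
    have l2: "((\<lambda>t. \<rho>inv (yfg \<rho>f (M * s) t)) \<longlongrightarrow> \<rho>inv 0) at_top"
      unfolding \<rho>inv_def by (rule continuous_on_tendsto_compose[OF K_inv_cont[OF \<rho>f_K] l1 0 ev])
    then have l3: "((\<lambda>t. 2 * \<rho>inv (yfg \<rho>f (M * s) t)) \<longlongrightarrow> 0) at_top"
      using K_inv_zero[OF \<rho>f_K] unfolding \<rho>inv_def by (auto intro: tendsto_mult_right_zero)
    have ev2: "eventually (\<lambda>t. 2 * \<rho>inv (yfg \<rho>f (M * s) t) \<in> {0..}) at_top"
      using yin s K_inv_nonneg[OF \<rho>f_K] unfolding \<rho>inv_def by (auto simp: eventually_at_top_linorder intro!: exI[of _ 0])
    have "((\<lambda>t. Gm (2 * \<rho>inv (yfg \<rho>f (M * s) t))) \<longlongrightarrow> Gm 0) at_top"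
      by (rule continuous_on_tendsto_compose[OF _ l3 _ ev2]) (use Gm_K in \<open>auto simp: class_K_def\<close>)
    then show ?thesis using Gm_K unfolding \<beta>f_def[abs_def] by (simp add: class_K_def)
  qed
qed

end


lemma dom_ts_convex: "convex (dom_ts ts)"
  by (rule is_interval_convex) (auto simp: is_interval_1 dom_ts_def intro: le_less_trans[of _ "ereal _"])

lemma dom_ts_sub: "t \<in> dom_ts ts \<Longrightarrow> {0..t} \<subseteq> dom_ts ts"
  by (auto simp: dom_ts_def intro: le_less_trans[of _ "ereal t"])

lemma dom_ts_inf: "dom_ts \<infinity> = {0..}"
  by (auto simp: dom_ts_def)

lemma dom_ts_0: "ts > 0 \<Longrightarrow> 0 \<in> dom_ts ts"
  by (auto simp: dom_ts_def zero_ereal_def)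

lemma dither_cont:
  fixes S :: "'b::t2_space set"
  assumes g: "continuous_on S g" and h: "continuous_on S h"
  shows "continuous_on S (\<lambda>s. dither \<omega> i j (g s) (h s))"
proof -
  have a: "continuous_on S (\<lambda>s. g s + \<omega> i * h s)" by (intro continuous_on_add g continuous_on_mult continuous_on_const h)
  have c: "continuous_on S (\<lambda>s. sqrt (2 * \<omega> i) * cos (g s + \<omega> i * h s))"
    by (intro continuous_on_mult continuous_on_const continuous_on_cos a)
  have d: "continuous_on S (\<lambda>s. sqrt (2 * \<omega> i) * sin (g s + \<omega> i * h s))"
    by (intro continuous_on_mult continuous_on_const continuous_on_sin a)
  show ?thesis by (cases "j = 1") (simp_all add: dither_def c d)
qed

context ES begin

lemma b0_cont: "continuous_on S b0"
proof -
  have "continuous_on UNIV b0"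
    by (rule lipschitz_on_continuous_on[of L0], rule lipschitz_onI)
       (use L0 in \<open>auto simp: dist_norm\<close>)
  then show ?thesis by (rule continuous_on_subset) simp
qed

lemma rhs_cont: "continuous_on (S :: 'b::t2_space set) \<phi> \<Longrightarrow> continuous_on S \<psi> \<Longrightarrow>
   continuous_on S (\<lambda>s. es_rhs b0 J xs r b \<omega> \<epsilon> (\<phi> s) (\<psi> s))"
  unfolding es_rhs_def
  by (intro continuous_intros continuous_on_compose2[OF b0_cont[of UNIV]] dither_cont
      continuous_on_compose2[OF J_cont[of UNIV]]) auto

lemma rhs_lip:
  assumes "\<epsilon> > 0"
  shows "norm (es_rhs b0 J xs r b \<omega> \<epsilon> x \<tau> - es_rhs b0 J xs r b \<omega> \<epsilon> y \<tau>) \<le> (L0 + Bb * M / \<epsilon>) * norm (x - y)"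
proof -
  have "es_rhs b0 J xs r b \<omega> \<epsilon> x \<tau> - es_rhs b0 J xs r b \<omega> \<epsilon> y \<tau>
      = (b0 (x + xs) - b0 (y + xs)) + (1 / \<epsilon>) *\<^sub>R (Ud (J (x + xs)) \<tau> - Ud (J (y + xs)) \<tau>)"
    unfolding es_rhs_Ud by (simp add: algebra_simps)
  also have "norm \<dots> \<le> norm (b0 (x + xs) - b0 (y + xs)) + (1 / \<epsilon>) * norm (Ud (J (x + xs)) \<tau> - Ud (J (y + xs)) \<tau>)"
    using assms by (metis norm_triangle_ineq norm_scaleR abs_of_pos zero_less_divide_1_iff)
  also have "\<dots> \<le> L0 * norm (x - y) + (1 / \<epsilon>) * (Bb * (M * norm (x - y)))"
  proof (rule add_mono)
    show "norm (b0 (x + xs) - b0 (y + xs)) \<le> L0 * norm (x - y)" using L0(2) by (metis add_diff_cancel_right)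
    have "norm (Ud (J (x + xs)) \<tau> - Ud (J (y + xs)) \<tau>) \<le> Bb * \<bar>J (x + xs) - J (y + xs)\<bar>" by (rule Ud_lip)
    also have "\<dots> \<le> Bb * (M * norm (x - y))"
      using J_lip[of "x + xs" "y + xs"] Bb_nonneg by (auto intro: mult_left_mono)
    finally show "(1 / \<epsilon>) * norm (Ud (J (x + xs)) \<tau> - Ud (J (y + xs)) \<tau>) \<le> (1 / \<epsilon>) * (Bb * (M * norm (x - y)))"
      using assms by (intro mult_left_mono) auto
  qed
  also have "\<dots> = (L0 + Bb * M / \<epsilon>) * norm (x - y)" by (simp add: algebra_simps)
  finally show ?thesis .
qed

lemma T_lin:
  assumes sol: "es_solution b0 J xs r b \<omega> \<epsilon> x0 \<tau>0 ts X T" and t: "t \<in> dom_ts ts"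
  shows "T t = \<tau>0 + t / \<epsilon>\<^sup>2"
proof -
  have ts: "ts > 0" "T 0 = \<tau>0" using sol by (auto simp: es_solution_def)
  have "\<exists>c. \<forall>x\<in>dom_ts ts. T x - x / \<epsilon>\<^sup>2 = c"
  proof (rule has_derivative_zero_constant[OF dom_ts_convex])
    fix x assume x: "x \<in> dom_ts ts"
    have dT: "(T has_vector_derivative 1 / \<epsilon>\<^sup>2) (at x within dom_ts ts)" using sol x by (auto simp: es_solution_def)
    have "((\<lambda>x. T x - x / \<epsilon>\<^sup>2) has_vector_derivative 1 / \<epsilon>\<^sup>2 - 1 / \<epsilon>\<^sup>2) (at x within dom_ts ts)"
      by (rule has_vector_derivative_diff[OF dT]) (use tau_deriv[of 0 \<epsilon> x "dom_ts ts"] in simp)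
    then show "((\<lambda>x. T x - x / \<epsilon>\<^sup>2) has_derivative (\<lambda>h. 0)) (at x within dom_ts ts)"
      by (simp add: has_vector_derivative_def)
  qed
  then obtain c where c: "\<And>x. x \<in> dom_ts ts \<Longrightarrow> T x - x / \<epsilon>\<^sup>2 = c" by blast
  have "c = \<tau>0" using c[OF dom_ts_0[OF ts(1)]] ts(2) by simp
  then show ?thesis using c[OF t] by simp
qed

lemma sol_ext:
  assumes \<epsilon>: "0 < \<epsilon>" "\<epsilon> \<le> 1" and sol: "es_solution b0 J xs r b \<omega> \<epsilon> x0 \<tau>0 ts X T"
  shows "\<exists>Y. Y 0 = x0 \<and> (\<forall>t\<ge>0. (Y has_vector_derivative es_rhs b0 J xs r b \<omega> \<epsilon> (Y t) (\<tau>0 + t / \<epsilon>\<^sup>2)) (at t within {0..}))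
     \<and> (\<forall>t\<in>dom_ts ts. Y t = X t) \<and> es_solution b0 J xs r b \<omega> \<epsilon> x0 \<tau>0 \<infinity> Y (\<lambda>t. \<tau>0 + t / \<epsilon>\<^sup>2)"
proof -
  define f where "f t x = es_rhs b0 J xs r b \<omega> \<epsilon> x (\<tau>0 + t / \<epsilon>\<^sup>2)" for t x
  define L where "L = L0 + Bb * M / \<epsilon>"
  have L: "L > 0" unfolding L_def using L0 Bb_nonneg M \<epsilon> by (simp add: add_pos_nonneg)
  have "\<exists>Y. Y 0 = x0 \<and> (\<forall>t\<ge>0. (Y has_vector_derivative f t (Y t)) (at t within {0..}))"
  proof (rule picard[of f L "cA / \<epsilon>"])
    fix \<phi> :: "real \<Rightarrow> 'a" and S assume "continuous_on S \<phi>"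
    then show "continuous_on S (\<lambda>s. f s (\<phi> s))" unfolding f_def using \<epsilon> by (intro rhs_cont continuous_intros) auto
  next
    fix t x y show "norm (f t x - f t y) \<le> L * norm (x - y)" unfolding f_def L_def by (rule rhs_lip[OF \<epsilon>(1)])
  next
    fix t x show "norm (f t x) \<le> cA / \<epsilon>" unfolding f_def by (rule rhs_bound[OF \<epsilon>])
  qed (rule L)
  then obtain Y where Y0: "Y 0 = x0" and dY: "\<And>t. t \<ge> 0 \<Longrightarrow> (Y has_vector_derivative f t (Y t)) (at t within {0..})"
    by blast
  have YX: "Y t = X t" if t: "t \<in> dom_ts ts" for t
  proof -
    have t0: "t \<ge> 0" using t by (simp add: dom_ts_def)
    show ?thesis
    proof (rule ode_unique[OF t0, of Y X f L])
      show "Y 0 = X 0" using Y0 sol by (simp add: es_solution_def)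
      fix s assume s: "s \<in> {0..t}"
      show "(Y has_vector_derivative f s (Y s)) (at s within {0..t})"
        by (rule has_vector_derivative_within_subset[OF dY]) (use s in auto)
      have sd: "s \<in> dom_ts ts" using dom_ts_sub[OF t] s by auto
      have "(X has_vector_derivative es_rhs b0 J xs r b \<omega> \<epsilon> (X s) (T s)) (at s within dom_ts ts)"
        using sol sd by (auto simp: es_solution_def)
      then have "(X has_vector_derivative f s (X s)) (at s within dom_ts ts)"
        unfolding f_def T_lin[OF sol sd] .
      then show "(X has_vector_derivative f s (X s)) (at s within {0..t})"
        by (rule has_vector_derivative_within_subset) (rule dom_ts_sub[OF t])
    next
      fix s x y show "norm (f s x - f s y) \<le> L * norm (x - y)" unfolding f_def L_def by (rule rhs_lip[OF \<epsilon>(1)])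
    qed (use L in simp)
  qed
  have Ycont: "continuous_on {0..} Y"
    using dY by (auto simp: continuous_on_eq_continuous_within intro: has_vector_derivative_continuous)
  have "es_solution b0 J xs r b \<omega> \<epsilon> x0 \<tau>0 \<infinity> Y (\<lambda>t. \<tau>0 + t / \<epsilon>\<^sup>2)"
    unfolding es_solution_def dom_ts_inf
  proof (intro conjI ballI)
    show "0 < (\<infinity>::ereal)" by simp
    show "Y 0 = x0" by (rule Y0)
    show "\<tau>0 + 0 / \<epsilon>\<^sup>2 = \<tau>0" by simp
    show "continuous_on {0..} (\<lambda>t. es_rhs b0 J xs r b \<omega> \<epsilon> (Y t) (\<tau>0 + t / \<epsilon>\<^sup>2))"
      using \<epsilon> by (intro rhs_cont Ycont continuous_intros) auto
    fix t :: real assume "t \<in> {0..}"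
    then show "(Y has_vector_derivative es_rhs b0 J xs r b \<omega> \<epsilon> (Y t) (\<tau>0 + t / \<epsilon>\<^sup>2)) (at t within {0..})"
      using dY unfolding f_def by auto
    show "((\<lambda>t. \<tau>0 + t / \<epsilon>\<^sup>2) has_vector_derivative 1 / \<epsilon>\<^sup>2) (at t within {0..})" by (rule tau_deriv)
  qed
  then show ?thesis using Y0 dY YX unfolding f_def by blast
qed

end


context ES begin

lemma cK_nonneg: "Tp \<ge> 0 \<Longrightarrow> cK Tp \<ge> 0"
  unfolding cK_def cK3_def using M L0 LJ cA_nonneg Bb_nonneg cA2_nonneg[of Tp]
  by (intro add_nonneg_nonneg mult_nonneg_nonneg) auto

lemma Gm_small: "\<nu> > 0 \<Longrightarrow> \<exists>d>0. \<forall>z. 0 \<le> z \<longrightarrow> z \<le> d \<longrightarrow> Gm z \<le> \<nu>"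
proof -
  assume \<nu>: "\<nu> > 0"
  have "continuous_on {0..} Gm" and g0: "Gm 0 = 0" using Gm_K by (auto simp: class_K_def)
  then obtain d0 where d0: "d0 > 0" "\<And>z. z \<in> {0..} \<Longrightarrow> dist z 0 < d0 \<Longrightarrow> dist (Gm z) (Gm 0) < \<nu>"
    using \<nu> unfolding continuous_on_iff by (metis atLeast_iff order_refl)
  have "\<forall>z. 0 \<le> z \<longrightarrow> z \<le> d0 / 2 \<longrightarrow> Gm z \<le> \<nu>"
  proof (intro allI impI)
    fix z :: real assume z: "0 \<le> z" "z \<le> d0 / 2"
    then have "dist (Gm z) (Gm 0) < \<nu>" using d0 by (intro d0(2)) (auto simp: dist_real_def)
    then show "Gm z \<le> \<nu>" using g0 by (simp add: dist_real_def)
  qed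
  then show ?thesis using d0 by (intro exI[of _ "d0 / 2"]) auto
qed

lemma main: "es_UGpAS b0 J xs r b \<omega>"
proof -
  obtain Tp where Tp: "Tp > 0" "\<forall>i\<in>{1..r}. \<exists>m::int. \<omega> i * Tp = 2 * pi * of_int m"
    using common_period by blast
  define \<rho>s where "\<rho>s = cg * M\<^sup>2"
  define C\<eta> where "C\<eta> = Tp * \<rho>s / 2 + Tp * cK Tp + M * cA * Tp"
  have cK0: "cK Tp \<ge> 0" using cK_nonneg Tp by simp
  have \<rho>s0: "\<rho>s \<ge> 0" unfolding \<rho>s_def using cg_pos by simp
  have C\<eta>0: "C\<eta> \<ge> 0" unfolding C\<eta>_def using Tp cK0 \<rho>s0 M cA_nonneg by simp
  show ?thesis unfolding es_UGpAS_def
  proof (rule exI[of _ \<beta>f], intro conjI allI impI)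
    show "class_KL \<beta>f" by (rule \<beta>f_KL)
    fix \<nu> :: real assume \<nu>: "\<nu> > 0"
    obtain d where d: "d > 0" "\<And>z. 0 \<le> z \<Longrightarrow> z \<le> d \<Longrightarrow> Gm z \<le> \<nu>" using Gm_small[OF \<nu>] by blast
    define \<delta> where "\<delta> = d / 4"
    have \<delta>0: "\<delta> > 0" unfolding \<delta>_def using d by simp
    have \<rho>\<delta>: "\<rho>f \<delta> > 0" using K_strict[OF \<rho>f_K, of 0 \<delta>] \<delta>0 \<rho>f_K by (simp add: class_K_def)
    define \<epsilon>s where "\<epsilon>s = min 1 (min (d / (4 * (C\<eta> + 1))) (\<rho>f \<delta> / (2 * (cK Tp + 1))))"
    show "\<exists>\<epsilon>s>0. \<forall>\<epsilon>. 0 < \<epsilon> \<and> \<epsilon> < \<epsilon>s \<longrightarrow>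
          (\<forall>x0 \<tau>0 ts X T. 0 \<le> \<tau>0 \<and> es_solution b0 J xs r b \<omega> \<epsilon> x0 \<tau>0 ts X T \<longrightarrow>
             (\<exists>X' T'. es_solution b0 J xs r b \<omega> \<epsilon> x0 \<tau>0 \<infinity> X' T' \<and> (\<forall>t\<in>dom_ts ts. X' t = X t \<and> T' t = T t)) \<and>
             (\<forall>t\<in>dom_ts ts. norm (X t) \<le> \<beta>f (norm x0) t + \<nu>))"
    proof (rule exI[of _ \<epsilon>s], intro conjI allI impI)
      show "\<epsilon>s > 0" unfolding \<epsilon>s_def using d C\<eta>0 \<rho>\<delta> cK0 by simp
      fix \<epsilon> x0 \<tau>0 ts X T
      assume \<epsilon>: "0 < \<epsilon> \<and> \<epsilon> < \<epsilon>s" and h: "0 \<le> \<tau>0 \<and> es_solution b0 J xs r b \<omega> \<epsilon> x0 \<tau>0 ts X T"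
      have \<epsilon>0: "\<epsilon> > 0" and \<epsilon>1: "\<epsilon> \<le> 1" using \<epsilon> unfolding \<epsilon>s_def by auto
      have \<epsilon>2: "\<epsilon> * (C\<eta> + 1) \<le> d / 4"
      proof -
        have "\<epsilon> \<le> d / (4 * (C\<eta> + 1))" using \<epsilon> unfolding \<epsilon>s_def by auto
        then show ?thesis using C\<eta>0 by (simp add: le_divide_eq algebra_simps)
      qed
      have \<epsilon>3: "2 * (cK Tp * \<epsilon>) \<le> \<rho>f \<delta>"
      proof -
        have "\<epsilon> \<le> \<rho>f \<delta> / (2 * (cK Tp + 1))" using \<epsilon> unfolding \<epsilon>s_def by auto
        then have "\<epsilon> * (2 * (cK Tp + 1)) \<le> \<rho>f \<delta>" using cK0 by (simp add: le_divide_eq)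
        moreover have "2 * (cK Tp * \<epsilon>) \<le> \<epsilon> * (2 * (cK Tp + 1))" using \<epsilon>0 by (simp add: algebra_simps)
        ultimately show ?thesis by linarith
      qed
      have sol: "es_solution b0 J xs r b \<omega> \<epsilon> x0 \<tau>0 ts X T" using h by simp
      obtain Y where Y0: "Y 0 = x0"
        and dY: "\<And>t. t \<ge> 0 \<Longrightarrow> (Y has_vector_derivative es_rhs b0 J xs r b \<omega> \<epsilon> (Y t) (\<tau>0 + t / \<epsilon>\<^sup>2)) (at t within {0..})"
        and YX: "\<And>t. t \<in> dom_ts ts \<Longrightarrow> Y t = X t"
        and Ysol: "es_solution b0 J xs r b \<omega> \<epsilon> x0 \<tau>0 \<infinity> Y (\<lambda>t. \<tau>0 + t / \<epsilon>\<^sup>2)"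
        using sol_ext[OF \<epsilon>0 \<epsilon>1 sol] by blast
      show "\<exists>X' T'. es_solution b0 J xs r b \<omega> \<epsilon> x0 \<tau>0 \<infinity> X' T' \<and> (\<forall>t\<in>dom_ts ts. X' t = X t \<and> T' t = T t)"
        using Ysol YX T_lin[OF sol] by (intro exI[of _ Y] exI[of _ "\<lambda>t. \<tau>0 + t / \<epsilon>\<^sup>2"]) auto
      define P where "P = \<epsilon>\<^sup>2 * Tp"
      have P: "P > 0" unfolding P_def using \<epsilon>0 Tp by simp
      define v where "v t = Vf (Y t)" for t
      define e1 where "e1 = cK Tp * \<epsilon>"
      define e2 where "e2 = M * cA * \<epsilon> * Tp"
      have Ybound: "norm (Y t) \<le> \<beta>f (norm x0) t + \<nu>" if t: "t \<ge> 0" for t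
      proof -
        have cmp: "v t \<le> max \<delta> (the_inv_into {0..} \<rho>f (yfg \<rho>f (M * norm x0) t)) + P * \<rho>s / 2 + P * e1 + e2"
        proof (rule discrete_cmp[OF P \<rho>f_K])
          show "\<And>x. x \<ge> 0 \<Longrightarrow> \<rho>f x \<le> \<rho>s" unfolding \<rho>s_def by (rule \<rho>f_bound)
          show "\<And>t. t \<ge> 0 \<Longrightarrow> v t \<ge> 0" unfolding v_def by (rule Vf_nonneg)
          show "v (t + P) \<le> v t - P * \<rho>f (v t) + P * e1" if t: "t \<ge> 0" for t
          proof -
            have pe: "J (Y (t + \<epsilon>\<^sup>2 * Tp) + xs) - J (Y t + xs)
                \<le> - (\<epsilon>\<^sup>2 * Tp) * (\<gamma> - \<kappa>3) * (norm (dJ (Y t + xs)))\<^sup>2 + (\<epsilon>\<^sup>2 * Tp) * (cK Tp * \<epsilon>)"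
              by (rule period_est[OF Tp \<epsilon>0 \<epsilon>1 t dY])
            have "P * \<rho>f (v t) \<le> P * (cg * (norm (dJ (Y t + xs)))\<^sup>2)"
              unfolding v_def using \<rho>f_rate[of "Y t"] P by (intro mult_left_mono) auto
            then show ?thesis using pe unfolding v_def Vf_def P_def e1_def cg_def by (simp add: algebra_simps)
          qed
          show "v t \<le> v t0 + e2" if "t0 \<ge> 0" "t0 \<le> t" "t \<le> t0 + P" for t0 t
          proof -
            have "norm (Y t - Y t0) \<le> cA * \<epsilon> * Tp" by (rule Xmove[OF \<epsilon>0 \<epsilon>1 that(1) dY]) (use that P_def in auto)
            moreover have "\<bar>Vf (Y t) - Vf (Y t0)\<bar> \<le> M * norm (Y t - Y t0)" by (rule Vf_lip)
            ultimately have "Vf (Y t) - Vf (Y t0) \<le> M * (cA * \<epsilon> * Tp)"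
              using M by (smt (verit, best) mult_left_mono)
            then show ?thesis unfolding v_def e2_def by (simp add: algebra_simps)
          qed
          show "\<delta> > 0" by (rule \<delta>0)
          show "2 * e1 \<le> \<rho>f \<delta>" unfolding e1_def by (rule \<epsilon>3)
          show "e1 \<ge> 0" unfolding e1_def using cK0 \<epsilon>0 by simp
          show "v 0 \<le> M * norm x0" unfolding v_def Y0 by (rule Vf_le)
        qed (rule t)
        define w where "w = \<rho>inv (yfg \<rho>f (M * norm x0) t)"
        define \<eta> where "\<eta> = P * \<rho>s / 2 + P * e1 + e2"
        have w0: "w \<ge> 0" unfolding w_def \<rho>inv_def by (rule K_inv_nonneg[OF \<rho>f_K yin]) (use t in simp_all)
        have vt: "v t \<le> max \<delta> w + \<eta>" using cmp unfolding w_def \<rho>inv_def \<eta>_def by simp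
        have \<eta>: "0 \<le> \<eta>" "\<eta> \<le> d / 4"
        proof -
          have Pe: "P \<le> \<epsilon> * Tp" unfolding P_def using \<epsilon>0 \<epsilon>1 Tp by (simp add: power2_eq_square mult_left_le)
          have "\<eta> \<le> \<epsilon> * Tp * \<rho>s / 2 + \<epsilon> * Tp * e1 + e2" unfolding \<eta>_def
            using Pe \<rho>s0 cK0 \<epsilon>0 unfolding e1_def by (intro add_mono divide_right_mono mult_right_mono) auto
          also have "\<dots> \<le> \<epsilon> * C\<eta>"
          proof -
            have "\<epsilon> * Tp * e1 \<le> \<epsilon> * Tp * cK Tp" unfolding e1_def using \<epsilon>0 \<epsilon>1 Tp cK0
              by (intro mult_left_mono) (auto simp: mult_left_le)
            then show ?thesis unfolding C\<eta>_def e2_def by (simp add: algebra_simps)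
          qed
          also have "\<dots> \<le> d / 4" using \<epsilon>2 \<epsilon>0 by (simp add: algebra_simps)
          finally show "\<eta> \<le> d / 4" .
          show "0 \<le> \<eta>" unfolding \<eta>_def e1_def e2_def using P \<rho>s0 cK0 \<epsilon>0 M cA_nonneg Tp by simp
        qed
        have "norm (Y t) \<le> Gm (v t)" unfolding v_def by (rule Gm_bound)
        also have "\<dots> \<le> Gm (max \<delta> w + \<eta>)" using vt Vf_nonneg unfolding v_def by (intro K_mono[OF Gm_K]) auto
        also have "\<dots> \<le> \<beta>f (norm x0) t + \<nu>"
        proof (cases "w \<ge> \<delta> \<and> w \<ge> \<eta>")
          case True
          then have "max \<delta> w + \<eta> \<le> 2 * w" by simp
          then have "Gm (max \<delta> w + \<eta>) \<le> Gm (2 * w)" using \<delta>0 \<eta> by (intro K_mono[OF Gm_K]) auto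
          also have "\<dots> = \<beta>f (norm x0) t" unfolding \<beta>f_def w_def ..
          finally show ?thesis using \<nu> by simp
        next
          case False
          then have "max \<delta> w + \<eta> \<le> d" using \<eta> w0 unfolding \<delta>_def by auto
          then have "Gm (max \<delta> w + \<eta>) \<le> \<nu>" using \<delta>0 \<eta> by (intro d(2)) auto
          moreover have "\<beta>f (norm x0) t \<ge> 0" unfolding \<beta>f_def w_def[symmetric] using w0 K_nonneg[OF Gm_K] by simp
          ultimately show ?thesis by simp
        qed
        finally show ?thesis .
      qed
      show "\<forall>t\<in>dom_ts ts. norm (X t) \<le> \<beta>f (norm x0) t + \<nu>"
      proof
        fix t assume t: "t \<in> dom_ts ts"
        then have "t \<ge> 0" by (simp add: dom_ts_def)
        then show "norm (X t) \<le> \<beta>f (norm x0) t + \<nu>" using Ybound[of t] YX[OF t] by simp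
      qed
    qed
  qed
qed

end

theorem theorem3:
  fixes b0 :: "'a::euclidean_space \<Rightarrow> 'a"
    and J :: "'a \<Rightarrow> real" and dJ :: "'a \<Rightarrow> 'a" and d2J :: "'a \<Rightarrow> ('a \<Rightarrow>\<^sub>L 'a)"
    and xs :: 'a and r :: nat and b :: "nat \<Rightarrow> nat \<Rightarrow> 'a" and \<omega> :: "nat \<Rightarrow> real"
    and \<gamma> \<kappa>3 M_J :: real and \<alpha>J :: "real \<Rightarrow> real"
  assumes r_pos: "r \<ge> 1" and r_dim: "2 * r \<ge> DIM('a)"
    and \<omega>_pos: "\<forall>i\<in>{1..r}. \<omega> i > 0 \<and> \<omega> i \<in> \<rat>"
    and \<omega>_distinct: "inj_on \<omega> {1..r}"
    and J_deriv: "\<forall>x. (J has_derivative (\<lambda>h. dJ x \<bullet> h)) (at x)"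
    and dJ_deriv: "\<forall>x. (dJ has_derivative blinfun_apply (d2J x)) (at x)"
    and d2J_cont: "continuous_on UNIV d2J"
    and xs_min: "\<forall>x. J xs \<le> J x"
    and excitation: "\<gamma> > 0" "\<forall>v. (\<Sum>i\<in>{1..r}. \<Sum>j\<in>{1,2}. (b i j \<bullet> v)\<^sup>2) \<ge> \<gamma> * (norm v)\<^sup>2"
    and reg_a: "\<forall>x. x \<noteq> xs \<longrightarrow> J x > J xs"
    and reg_b: "\<forall>x. dJ x = 0 \<longleftrightarrow> x = xs"
    and reg_c: "\<exists>L_J>0. \<forall>x. norm (d2J x) \<le> L_J"
    and reg_d: "\<kappa>3 > 0" "\<forall>x. norm (b0 x) \<le> \<kappa>3 * norm (dJ x)"
    and reg_e: "\<exists>L0>0. \<forall>x1 x2. norm (b0 x1 - b0 x2) \<le> L0 * norm (x1 - x2)"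
    and gamma_kappa: "\<gamma> > \<kappa>3"
    and radially_unbounded: "filterlim J at_top at_infinity"
    and alphaJ: "class_K \<alpha>J" and MJ: "M_J > 0"
    and grad_bounds: "\<forall>x. (\<alpha>J (norm (x - xs)))\<^sup>2 \<le> (norm (dJ x))\<^sup>2 \<and> (norm (dJ x))\<^sup>2 \<le> M_J\<^sup>2"
  shows "es_UGpAS b0 J xs r b \<omega>"
proof -
  obtain LJ where LJ: "LJ > 0" "\<forall>x. norm (d2J x) \<le> LJ" using reg_c by blast
  obtain L0 where L0: "L0 > 0" "\<forall>x1 x2. norm (b0 x1 - b0 x2) \<le> L0 * norm (x1 - x2)" using reg_e by blast
  interpret ES b0 J dJ d2J xs r b \<omega> \<gamma> \<kappa>3 M_J \<alpha>J LJ L0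
    by unfold_locales (rule assms LJ L0)+
  show ?thesis by (rule main)
qed

end
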